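(* For every $n\in\mathbb{N}$, $$\sum_{|\lambda|=n}\ \sum_{\pi\in S_\lambda}q^{\mathrm{maj}(\pi)}t^{\mathrm{des}(\pi)}\,m_\lambda=\sum_{|\nu|=n}\ \sum_{T\in\mathrm{QYT}(\nu)}q^{\mathrm{maj}(T)}t^{\mathrm{des}(T)}\,s_\nu.$$
   Context: $m_\lambda$ and $s_\nu$ are the monomial symmetric and Schur functions. $S_\lambda$ is the set of multiset permutations (words) of $\{1^{\lambda_1},2^{\lambda_2},\dots\}$; for a word $\pi$, $\mathrm{Des}(\pi)=\{i:\pi_i>\pi_{i+1}\}$, $\mathrm{des}(\pi)=|\mathrm{Des}(\pi)|$, $\mathrm{maj}(\pi)=\sum_{i\in\mathrm{Des}(\pi)}i$. Tableaux are in French convention. For a standard Young tableau $T$, $\mathrm{Des}(T)=\{i: i+1$ lies in a strictly higher row than $i\}$, with $\mathrm{des},\mathrm{maj}$ as for words. A quasi-Yamanouchi tableau (QYT) is a semistandard Young tableau such that whenever an entry $i\ge2$ appears, some instance of $i$ lies in a strictly higher row than some instance of $i-1$; $\mathrm{QYT}(\nu)$ is the set of QYT of shape $\nu$. Standardization (replace the $1$'s by $1,2,\dots$ left to right, then the $2$'s by the next integers left to right, etc.) is a bijection from $\mathrm{QYT}(\nu)$ to standard Young tableaux of shape $\nu$; $\mathrm{maj},\mathrm{des}$ of a QYT are those of its standardization. *)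

theory Defs
  imports Main "HOL-Library.Multiset"
begin

text \<open>Partitions are lists of positive integers in weakly decreasing order
  (lambda_1 = lambda ! 0). Variables are x_1, ..., x_N, i.e. x :: nat => 'a at 1..N.\<close>

definition partitions :: "nat \<Rightarrow> nat list set" where
  "partitions n = {lam. sum_list lam = n \<and> sorted_wrt (\<ge>) lam \<and> 0 \<notin> set lam}"

definition words :: "nat list \<Rightarrow> nat list set" where
  "words lam = {w. length w = sum_list lam \<and> set w \<subseteq> {1..length lam} \<and>
       (\<forall>i<length lam. count_list w (Suc i) = lam ! i)}"

text \<open>Descent set of a word, positions 1-indexed.\<close>
definition word_Des :: "nat list \<Rightarrow> nat set" where
  "word_Des w = {i. 1 \<le> i \<and> i < length w \<and> w ! (i - 1) > w ! i}"

definition word_des :: "nat list \<Rightarrow> nat" where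
  "word_des w = card (word_Des w)"

definition word_maj :: "nat list \<Rightarrow> nat" where
  "word_maj w = \<Sum>(word_Des w)"

definition monomial_sym :: "nat \<Rightarrow> nat list \<Rightarrow> (nat \<Rightarrow> 'a::comm_ring_1) \<Rightarrow> 'a" where
  "monomial_sym N lam x =
     (\<Sum>\<alpha> \<in> {\<alpha>. (\<forall>i. i \<notin> {1..N} \<longrightarrow> \<alpha> i = 0) \<and>
                 mset (filter (\<lambda>k. k \<noteq> 0) (map \<alpha> [1..<Suc N])) = mset lam}.
        \<Prod>i\<in>{1..N}. x i ^ \<alpha> i)"

text \<open>Young diagram in French convention: row r (r = 0 bottom) has lambda ! r cells;
  a cell (r,c) lies in a higher row than (r',c') iff r > r'.\<close>
definition cells :: "nat list \<Rightarrow> (nat \<times> nat) set" where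
  "cells nu = {(r, c). r < length nu \<and> c < nu ! r}"

definition ssyt :: "nat list \<Rightarrow> (nat \<times> nat \<Rightarrow> nat) \<Rightarrow> bool" where
  "ssyt nu T \<longleftrightarrow>
     (\<forall>p. p \<notin> cells nu \<longrightarrow> T p = 0) \<and>
     (\<forall>p\<in>cells nu. 1 \<le> T p) \<and>
     (\<forall>r c. (r, c) \<in> cells nu \<and> (r, Suc c) \<in> cells nu \<longrightarrow> T (r, c) \<le> T (r, Suc c)) \<and>
     (\<forall>r c. (r, c) \<in> cells nu \<and> (Suc r, c) \<in> cells nu \<longrightarrow> T (r, c) < T (Suc r, c))"

definition schur :: "nat \<Rightarrow> nat list \<Rightarrow> (nat \<Rightarrow> 'a::comm_ring_1) \<Rightarrow> 'a" where
  "schur N nu x =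
     (\<Sum>T \<in> {T. ssyt nu T \<and> (\<forall>p\<in>cells nu. T p \<le> N)}. \<Prod>p\<in>cells nu. x (T p))"

definition qyt :: "nat list \<Rightarrow> (nat \<times> nat \<Rightarrow> nat) \<Rightarrow> bool" where
  "qyt nu T \<longleftrightarrow> ssyt nu T \<and>
     (\<forall>p\<in>cells nu. 2 \<le> T p \<longrightarrow>
        (\<exists>p1\<in>cells nu. \<exists>p2\<in>cells nu. T p1 = T p \<and> T p2 = T p - 1 \<and> fst p1 > fst p2))"

definition QYT :: "nat list \<Rightarrow> (nat \<times> nat \<Rightarrow> nat) set" where
  "QYT nu = {T. qyt nu T}"

text \<open>Standardization: the 1's become 1,2,... from left to right, then the 2's, etc.\<close>
definition standardize :: "nat list \<Rightarrow> (nat \<times> nat \<Rightarrow> nat) \<Rightarrow> (nat \<times> nat \<Rightarrow> nat)" where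
  "standardize nu T = (\<lambda>(r, c). if (r, c) \<in> cells nu then
       card {p\<in>cells nu. T p < T (r, c)} +
       card {p\<in>cells nu. T p = T (r, c) \<and> snd p < c} + 1
     else 0)"

definition syt_Des :: "nat list \<Rightarrow> (nat \<times> nat \<Rightarrow> nat) \<Rightarrow> nat set" where
  "syt_Des nu S = {i. 1 \<le> i \<and> i < card (cells nu) \<and>
      (\<exists>p1\<in>cells nu. \<exists>p2\<in>cells nu. S p1 = i \<and> S p2 = Suc i \<and> fst p2 > fst p1)}"

definition tab_des :: "nat list \<Rightarrow> (nat \<times> nat \<Rightarrow> nat) \<Rightarrow> nat" where
  "tab_des nu T = card (syt_Des nu (standardize nu T))"

definition tab_maj :: "nat list \<Rightarrow> (nat \<times> nat \<Rightarrow> nat) \<Rightarrow> nat" where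
  "tab_maj nu T = \<Sum>(syt_Des nu (standardize nu T))"

end

theory Submission
  imports Defs
begin

section \<open>Row insertion\<close>

fun ins_row :: "nat \<Rightarrow> nat list \<Rightarrow> nat option \<times> nat list" where
  "ins_row x [] = (None, [x])"
| "ins_row x (a # r) = (if x < a then (Some a, x # r)
     else (case ins_row x r of (ob, r') \<Rightarrow> (ob, a # r')))"

lemma ins_row_None: "ins_row x r = (None, r') \<Longrightarrow> r' = r @ [x] \<and> (\<forall>a\<in>set r. a \<le> x)"
  by (induction r arbitrary: r') (auto split: if_splits prod.splits)

lemma ins_row_app: "\<forall>a\<in>set r. a \<le> x \<Longrightarrow> ins_row x r = (None, r @ [x])"
  by (induction r) auto

lemma ins_row_Some: "ins_row x r = (Some y, r') \<Longrightarrow>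
   x < y \<and> length r' = length r \<and> y \<in> set r \<and> r' \<noteq> [] \<and> hd r' \<le> x"
  by (induction r arbitrary: r') (auto split: if_splits prod.splits)

lemma ins_row_Some_le: "ins_row x r = (Some y, r') \<Longrightarrow> i < length r \<Longrightarrow> r' ! i \<le> r ! i"
proof (induction r arbitrary: r' i)
  case Nil then show ?case by simp
next
  case (Cons a r)
  show ?case
  proof (cases "x < a")
    case True
    with Cons.prems show ?thesis by (cases i) auto
  next
    case False
    with Cons.prems obtain r1 where r1: "ins_row x r = (Some y, r1)" "r' = a # r1"
      by (auto split: prod.splits)
    show ?thesis
    proof (cases i)
      case 0 with r1 show ?thesis by simp
    next
      case (Suc j) with r1 Cons.IH[OF r1(1), of j] Cons.prems show ?thesis by simp
    qed
  qed
qed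

lemma ins_row_set: "set (snd (ins_row x r)) \<subseteq> insert x (set r)"
  by (induction r) (auto split: prod.splits)

lemma ins_row_sorted: "sorted r \<Longrightarrow> sorted (snd (ins_row x r))"
proof (induction r)
  case Nil then show ?case by simp
next
  case (Cons a r)
  show ?case
  proof (cases "x < a")
    case True with Cons.prems show ?thesis by auto
  next
    case False
    have "set (snd (ins_row x r)) \<subseteq> insert x (set r)" by (rule ins_row_set)
    with False Cons show ?thesis by (auto split: prod.splits)
  qed
qed

lemma ins_row_mset: "ins_row x r = (ob, r') \<Longrightarrow>
   mset r' + (case ob of None \<Rightarrow> {#} | Some y \<Rightarrow> {#y#}) = add_mset x (mset r)"
  by (induction r arbitrary: ob r') (auto split: if_splits prod.splits option.splits)

definition abv :: "nat list \<Rightarrow> nat list \<Rightarrow> bool" where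
  "abv b r \<longleftrightarrow> length r \<le> length b \<and> (\<forall>i<length r. b ! i < r ! i)"

lemma abv_Nil2[simp]: "abv b []" by (simp add: abv_def)
lemma abv_Nil1[simp]: "abv [] (y # r) = False" by (simp add: abv_def)
lemma abv_Cons[simp]: "abv (x # b) (y # r) = (x < y \<and> abv b r)"
  unfolding abv_def by (simp add: All_less_Suc2) blast

lemma abv_mono: "abv b r \<Longrightarrow> length b' = length b \<Longrightarrow> (\<forall>i<length b. b' ! i \<le> b ! i) \<Longrightarrow> abv b' r"
  unfolding abv_def
proof (intro conjI allI impI)
  fix i assume a: "length r \<le> length b \<and> (\<forall>i<length r. b ! i < r ! i)"
    and l: "length b' = length b" and le: "\<forall>i<length b. b' ! i \<le> b ! i" and i: "i < length r"
  then have "b' ! i \<le> b ! i" "b ! i < r ! i" by auto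
  then show "b' ! i < r ! i" by linarith
qed auto

lemma abv_append: "abv b r \<Longrightarrow> abv (b @ [x]) r"
  unfolding abv_def by (auto simp: nth_append)

lemma lemmaA: "sorted b \<Longrightarrow> ins_row x b = (Some y, b') \<Longrightarrow> abv b r \<Longrightarrow>
   abv b' (snd (ins_row y r))"
proof (induction b arbitrary: b' r)
  case Nil then show ?case by simp
next
  case (Cons a b)
  show ?case
  proof (cases "x < a")
    case True
    with Cons.prems have yb: "y = a" "b' = x # b" by auto
    show ?thesis
    proof (cases r)
      case Nil with True yb show ?thesis by (simp add: abv_def)
    next
      case (Cons c r1)
      with Cons.prems yb True show ?thesis by auto
    qed
  next
    case False
    with Cons.prems obtain b1 where b1: "ins_row x b = (Some y, b1)" "b' = a # b1"
      by (auto split: prod.splits)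
    from ins_row_Some[OF b1(1)] have xy: "x < y" and lb: "length b1 = length b" by auto
    have le: "\<forall>i<length b. b1 ! i \<le> b ! i" using ins_row_Some_le[OF b1(1)] by auto
    show ?thesis
    proof (cases r)
      case Nil with False xy b1 show ?thesis by (simp add: abv_def)
    next
      case (Cons c r1)
      with Cons.prems have ac: "a < c" and ab: "abv b r1" by auto
      show ?thesis
      proof (cases "y < c")
        case True
        have "abv b1 r1" using abv_mono[OF ab lb le] .
        with True Cons b1 False xy show ?thesis by auto
      next
        case False
        have IH: "abv b1 (snd (ins_row y r1))"
          using Cons.IH[OF _ b1(1) ab] Cons.prems(1) by auto
        with False \<open>r = c # r1\<close> b1 ac show ?thesis by (auto split: prod.splits)
      qed
    qed
  qed
qed

section \<open>Tableau insertion\<close>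

fun ins :: "nat \<Rightarrow> nat list list \<Rightarrow> nat list list \<times> nat" where
  "ins x [] = ([[x]], 0)"
| "ins x (r # rs) = (case ins_row x r of
      (None, r') \<Rightarrow> (r' # rs, 0)
    | (Some y, r') \<Rightarrow> (case ins y rs of (rs', k) \<Rightarrow> (r' # rs', Suc k)))"

fun ssytL :: "nat list list \<Rightarrow> bool" where
  "ssytL [] = True"
| "ssytL (r # rs) = (r \<noteq> [] \<and> sorted r \<and> ssytL rs \<and> (case rs of [] \<Rightarrow> True | r2 # _ \<Rightarrow> abv r r2))"

lemma ins_Cons_fst: "fst (ins x (r # rs)) = snd (ins_row x r) #
   (case fst (ins_row x r) of None \<Rightarrow> rs | Some y \<Rightarrow> fst (ins y rs))"
  by (auto split: prod.splits option.splits)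

lemma ins_ssyt: "ssytL T \<Longrightarrow> ssytL (fst (ins x T))"
proof (induction T arbitrary: x)
  case Nil then show ?case by simp
next
  case (Cons r rs)
  show ?case
  proof (cases "ins_row x r")
    case (Pair ob r')
    show ?thesis
    proof (cases ob)
      case None
      with Pair have r': "r' = r @ [x]" using ins_row_None by auto
      have "sorted r'" using ins_row_sorted[of r x] Cons.prems Pair by auto
      have f: "fst (ins x (r # rs)) = r' # rs" using Pair None by simp
      show ?thesis
      proof (cases rs)
        case Nil with f r' \<open>sorted r'\<close> show ?thesis by simp
      next
        case (Cons r2 rs2)
        with Cons.prems have "abv r r2" "ssytL rs" by auto
        with f r' \<open>sorted r'\<close> Cons show ?thesis by (simp add: abv_append)
      qed
    next
      case (Some y)
      with Pair have P: "ins_row x r = (Some y, r')" by simp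
      have s: "sorted r'" using ins_row_sorted[of r x] Cons.prems Pair by auto
      from ins_row_Some[OF P] have ne: "r' \<noteq> []" and hx: "hd r' \<le> x" and xy: "x < y" by auto
      have IH: "ssytL (fst (ins y rs))" using Cons.IH Cons.prems by auto
      have ab: "case fst (ins y rs) of [] \<Rightarrow> True | r2 # _ \<Rightarrow> abv r' r2"
      proof (cases rs)
        case Nil
        have "fst (ins y rs) = [[y]]" using Nil by simp
        moreover have "hd r' < y" using hx xy by simp
        ultimately show ?thesis using ne by (cases r') auto
      next
        case (Cons r2 rs2)
        have "abv r r2" using Cons.prems \<open>rs = r2 # rs2\<close> by auto
        from lemmaA[OF _ P this] Cons.prems
        have "abv r' (snd (ins_row y r2))" by auto
        moreover have "fst (ins y rs) = snd (ins_row y r2) #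
          (case fst (ins_row y r2) of None \<Rightarrow> rs2 | Some z \<Rightarrow> fst (ins z rs2))"
          unfolding \<open>rs = r2 # rs2\<close> by (rule ins_Cons_fst)
        ultimately show ?thesis by simp
      qed
      have "fst (ins x (r # rs)) = r' # fst (ins y rs)"
        using P by (auto split: prod.splits)
      with s ne IH ab show ?thesis by simp
    qed
  qed
qed

definition addcell :: "nat list \<Rightarrow> nat \<Rightarrow> nat list" where
  "addcell sh k = (if k < length sh then sh[k := Suc (sh ! k)] else sh @ [1])"

lemma addcell_Cons_Suc[simp]: "addcell (a # sh) (Suc k) = a # addcell sh k"
  by (simp add: addcell_def)
lemma addcell_Cons_0[simp]: "addcell (a # sh) 0 = Suc a # sh"
  by (simp add: addcell_def)
lemma addcell_Nil[simp]: "addcell [] k = [1]"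
  by (simp add: addcell_def)

lemma ins_shape: "map length (fst (ins x T)) = addcell (map length T) (snd (ins x T)) \<and>
    snd (ins x T) \<le> length T"
proof (induction T arbitrary: x)
  case Nil then show ?case by simp
next
  case (Cons r rs)
  show ?case
  proof (cases "ins_row x r")
    case (Pair ob r')
    show ?thesis
    proof (cases ob)
      case None
      with Pair have "r' = r @ [x]" using ins_row_None by auto
      with Pair None show ?thesis by auto
    next
      case (Some y)
      with Pair ins_row_Some[of x r y r'] Cons.IH[of y] show ?thesis
        by (auto split: prod.splits)
    qed
  qed
qed

lemma ins_mset: "mset (concat (fst (ins x T))) = add_mset x (mset (concat T))"
proof (induction T arbitrary: x)
  case Nil then show ?case by simp
next
  case (Cons r rs)
  show ?case
  proof (cases "ins_row x r")
    case (Pair ob r')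
    note m = ins_row_mset[OF Pair]
    show ?thesis
    proof (cases ob)
      case None
      with Pair m show ?thesis by auto
    next
      case (Some y)
      with Pair m Cons.IH[of y] show ?thesis
        by (auto split: prod.splits)
    qed
  qed
qed


section \<open>Reverse insertion\<close>

fun unb_row :: "nat \<Rightarrow> nat list \<Rightarrow> nat \<times> nat list" where
  "unb_row z [] = (0, [])"
| "unb_row z (a # r) = (if r \<noteq> [] \<and> hd r < z then (case unb_row z r of (x, r') \<Rightarrow> (x, a # r'))
     else (a, z # r))"

fun uns :: "nat list list \<Rightarrow> nat \<Rightarrow> nat \<times> nat list list" where
  "uns [] k = (0, [])"
| "uns (r # rs) 0 = (last r, if butlast r = [] then rs else butlast r # rs)"
| "uns (r # rs) (Suc k) = (case uns rs k of (z, rs') \<Rightarrow> (case unb_row z r of (x, r') \<Rightarrow> (x, r' # rs')))"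

lemma sorted_hd_le: "sorted (a # r) \<Longrightarrow> r \<noteq> [] \<Longrightarrow> a \<le> hd r"
  by (cases r) auto

lemma R1: "sorted r \<Longrightarrow> ins_row x r = (Some y, r') \<Longrightarrow> unb_row y r' = (x, r)"
proof (induction r arbitrary: r')
  case Nil then show ?case by simp
next
  case (Cons a r)
  show ?case
  proof (cases "x < a")
    case True
    with Cons.prems have e: "y = a" "r' = x # r" by auto
    have nc: "\<not> (r \<noteq> [] \<and> hd r < a)" using sorted_hd_le[OF Cons.prems(1)] by auto
    have "unb_row a (x # r) = (x, a # r)" unfolding unb_row.simps if_not_P[OF nc] by simp
    with e show ?thesis by simp
  next
    case False
    with Cons.prems obtain r1 where r1: "ins_row x r = (Some y, r1)" "r' = a # r1"
      by (auto split: prod.splits)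
    from ins_row_Some[OF r1(1)] have c: "r1 \<noteq> [] \<and> hd r1 < y" by auto
    have "unb_row y r1 = (x, r)" using Cons.IH[OF _ r1(1)] Cons.prems(1) by simp
    with c r1(2) show ?thesis by simp
  qed
qed

lemma unb_row_char: "sorted r \<Longrightarrow> r \<noteq> [] \<Longrightarrow> hd r < z \<Longrightarrow> unb_row z r = (x, r') \<Longrightarrow>
  \<exists>i<length r. x = r ! i \<and> r' = r[i := z] \<and> r ! i < z \<and> (\<forall>c. i < c \<and> c < length r \<longrightarrow> z \<le> r ! c)"
proof (induction r arbitrary: x r')
  case Nil then show ?case by simp
next
  case (Cons a r1)
  show ?case
  proof (cases "r1 \<noteq> [] \<and> hd r1 < z")
    case True
    then obtain x1 r1' where u: "unb_row z r1 = (x1, r1')" "x = x1" "r' = a # r1'"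
      using Cons.prems by (auto split: prod.splits)
    from Cons.IH[OF _ _ _ u(1)] True Cons.prems(1)
    obtain i where i: "i < length r1" "x1 = r1 ! i" "r1' = r1[i := z]" "r1 ! i < z"
      "\<forall>c. i < c \<and> c < length r1 \<longrightarrow> z \<le> r1 ! c" by auto
    show ?thesis
    proof (rule exI[of _ "Suc i"], intro conjI allI impI)
      fix c assume "Suc i < c \<and> c < length (a # r1)"
      then obtain c' where "c = Suc c'" "i < c'" "c' < length r1" by (cases c) auto
      with i show "z \<le> (a # r1) ! c" by simp
    qed (use i u in auto)
  next
    case False
    with Cons.prems have u: "x = a" "r' = z # r1" by auto
    show ?thesis
    proof (rule exI[of _ 0], intro conjI allI impI)
      fix c assume c: "0 < c \<and> c < length (a # r1)"
      then obtain c' where c': "c = Suc c'" "c' < length r1" by (cases c) auto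
      then have "r1 \<noteq> []" by auto
      with False have "z \<le> hd r1" by auto
      also have "hd r1 = r1 ! 0" using \<open>r1 \<noteq> []\<close> by (simp add: hd_conv_nth)
      also have "r1 ! 0 \<le> r1 ! c'" using Cons.prems(1) c' by (simp add: sorted_nth_mono)
      finally show "z \<le> (a # r1) ! c" using c' by simp
    qed (use u Cons.prems in auto)
  qed
qed

lemma unb_row_mem: "r \<noteq> [] \<Longrightarrow> fst (unb_row z r) \<in> set r"
  by (induction r) (auto split: prod.splits)

lemma R2: "sorted r \<Longrightarrow> r \<noteq> [] \<Longrightarrow> hd r < z \<Longrightarrow> unb_row z r = (x, r') \<Longrightarrow>
   ins_row x r' = (Some z, r)"
proof (induction r arbitrary: x r')
  case Nil then show ?case by simp
next
  case (Cons a r1)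
  show ?case
  proof (cases "r1 \<noteq> [] \<and> hd r1 < z")
    case True
    then obtain r1' where u: "unb_row z r1 = (x, r1')" "r' = a # r1'"
      using Cons.prems by (auto split: prod.splits)
    have "x \<in> set r1" using unb_row_mem[of r1 z] u True by simp
    then have "a \<le> x" using Cons.prems(1) by auto
    moreover have "ins_row x r1' = (Some z, r1)" using Cons.IH[OF _ _ _ u(1)] True Cons.prems(1) by auto
    ultimately show ?thesis using u by auto
  next
    case False
    with Cons.prems have u: "x = a" "r' = z # r1" by auto
    with Cons.prems show ?thesis by simp
  qed
qed

lemma R2_sorted: "sorted r \<Longrightarrow> r \<noteq> [] \<Longrightarrow> hd r < z \<Longrightarrow> unb_row z r = (x, r') \<Longrightarrow> sorted r'"
proof -
  assume a: "sorted r" "r \<noteq> []" "hd r < z" "unb_row z r = (x, r')"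
  from unb_row_char[OF a] obtain i where i: "i<length r" "x = r ! i" "r' = r[i := z]" "r ! i < z"
    "\<forall>c. i < c \<and> c < length r \<longrightarrow> z \<le> r ! c" by blast
  show "sorted r'"
    unfolding sorted_iff_nth_mono
  proof (intro allI impI)
    fix p q assume pq: "p \<le> q" "q < length r'"
    have s: "\<And>p q. p \<le> q \<Longrightarrow> q < length r \<Longrightarrow> r ! p \<le> r ! q" using a(1) by (simp add: sorted_nth_mono)
    show "r' ! p \<le> r' ! q"
      using pq i s[of p q] s[of p i] by (cases "p = i"; cases "q = i") (auto simp: nth_list_update)
  qed
qed

definition rowstep :: "nat list \<Rightarrow> nat list \<Rightarrow> nat \<Rightarrow> bool" where
  "rowstep r r' z \<longleftrightarrow> (\<exists>i<length r. z = r ! i \<and> length r' \<le> length r \<and>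
     (\<forall>c<length r'. r ! c \<le> r' ! c) \<and> (\<forall>c. i \<le> c \<and> c < length r' \<longrightarrow> z < r' ! c))"

lemma pair_uns: "sorted b \<Longrightarrow> b \<noteq> [] \<Longrightarrow> abv b r \<Longrightarrow> rowstep r r' z \<Longrightarrow> unb_row z b = (x, b') \<Longrightarrow>
  hd b < z \<and> abv b' r' \<and> rowstep b b' x"
proof -
  assume sb: "sorted b" and ne: "b \<noteq> []" and ab: "abv b r" and rs: "rowstep r r' z"
    and u: "unb_row z b = (x, b')"
  from rs obtain i where i: "i < length r" "z = r ! i" "length r' \<le> length r"
    "\<forall>c<length r'. r ! c \<le> r' ! c" "\<forall>c. i \<le> c \<and> c < length r' \<longrightarrow> z < r' ! c"
    unfolding rowstep_def by blast
  from ab have lb: "length r \<le> length b" and lt: "\<forall>c<length r. b ! c < r ! c"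
    unfolding abv_def by auto
  have bi: "b ! i < z" using lt i by auto
  have "hd b = b ! 0" using ne by (simp add: hd_conv_nth)
  also have "b ! 0 \<le> b ! i" using sb i lb by (simp add: sorted_nth_mono)
  finally have hb: "hd b < z" using bi by simp
  from unb_row_char[OF sb ne hb u] obtain i0 where i0: "i0 < length b" "x = b ! i0"
    "b' = b[i0 := z]" "b ! i0 < z" "\<forall>c. i0 < c \<and> c < length b \<longrightarrow> z \<le> b ! c" by blast
  have ii0: "i \<le> i0"
  proof (rule ccontr)
    assume "\<not> i \<le> i0"
    then have "z \<le> b ! i" using i0(5) i lb by auto
    with bi show False by simp
  qed
  have "abv b' r'"
    unfolding abv_def
  proof (intro conjI allI impI)
    show "length r' \<le> length b'" using i0 i lb by simp
    fix c assume c: "c < length r'"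
    show "b' ! c < r' ! c"
    proof (cases "c = i0")
      case True
      then show ?thesis using i0 i(5) ii0 c by simp
    next
      case False
      then have "b' ! c = b ! c" using i0 by simp
      also have "b ! c < r ! c" using lt c i by simp
      also have "r ! c \<le> r' ! c" using i(4) c by simp
      finally show ?thesis .
    qed
  qed
  moreover have "rowstep b b' x"
    unfolding rowstep_def
  proof (rule exI[of _ i0], intro conjI allI impI)
    fix c assume c: "c < length b'"
    show "b ! c \<le> b' ! c" using i0 c by (cases "c = i0") auto
  next
    fix c assume c: "i0 \<le> c \<and> c < length b'"
    show "x < b' ! c"
    proof (cases "c = i0")
      case True then show ?thesis using i0 c by simp
    next
      case False
      then have "i0 < c" using c by simp
      then have "z \<le> b ! c" using i0(5) c i0(3) by simp
      then show ?thesis using i0 False by simp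
    qed
  qed (use i0 in auto)
  ultimately show ?thesis using hb by simp
qed

definition corner :: "nat list list \<Rightarrow> nat \<Rightarrow> bool" where
  "corner T k \<longleftrightarrow> k < length T \<and> (Suc k = length T \<or> length (T ! Suc k) < length (T ! k))"

definition hdrow :: "nat list list \<Rightarrow> nat list" where
  "hdrow T = (case T of [] \<Rightarrow> [] | r # _ \<Rightarrow> r)"

lemma ssytL_Cons_ne: "ssytL (r # rs) \<Longrightarrow> rs \<noteq> [] \<Longrightarrow> rs ! 0 \<noteq> []"
  by (cases rs) auto

lemma U1: "ssytL T \<Longrightarrow> corner T k \<Longrightarrow> uns T k = (x, T0) \<Longrightarrow>
  ssytL T0 \<and> ins x T0 = (T, k) \<and> rowstep (hd T) (hdrow T0) x"
proof (induction T arbitrary: k x T0)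
  case Nil then show ?case by (simp add: corner_def)
next
  case (Cons r rs)
  show ?case
  proof (cases k)
    case 0
    with Cons.prems have x: "x = last r" and T0: "T0 = (if butlast r = [] then rs else butlast r # rs)"
      by auto
    have rne: "r \<noteq> []" and sr: "sorted r" using Cons.prems by auto
    have rsl: "rowstep r (butlast r) (last r)"
      unfolding rowstep_def
      by (rule exI[of _ "length r - 1"]) (use rne in \<open>auto simp: last_conv_nth nth_butlast\<close>)
    show ?thesis
    proof (cases "butlast r = []")
      case True
      have "rs = []"
      proof (rule ccontr)
        assume "rs \<noteq> []"
        with Cons.prems(2) 0 have "length (rs ! 0) < length r" by (auto simp: corner_def)
        moreover have "length r = 1" proof - have "length r - 1 = 0" using True length_butlast[of r] by simp then show ?thesis using rne by (cases r) auto qed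
        ultimately have "rs ! 0 = []" by simp
        with ssytL_Cons_ne[OF Cons.prems(1) \<open>rs \<noteq> []\<close>] show False by simp
      qed
      moreover have "r = [x]" using True rne x by (metis append_butlast_last_id append_Nil)
      ultimately show ?thesis using T0 True 0 x rsl by (simp add: hdrow_def)
    next
      case False
      then have T0': "T0 = butlast r # rs" using T0 by simp
      have sb: "sorted (butlast r)" using sr by (simp add: sorted_butlast)
      have ab: "case rs of [] \<Rightarrow> True | r2 # _ \<Rightarrow> abv (butlast r) r2"
      proof (cases rs)
        case Nil then show ?thesis by simp
      next
        case (Cons r2 rs2)
        with Cons.prems(1) have a: "abv r r2" by simp
        from Cons.prems(2) 0 Cons have l: "length r2 < length r" by (simp add: corner_def)
        have "abv (butlast r) r2" unfolding abv_def
        proof (intro conjI allI impI)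
          show "length r2 \<le> length (butlast r)" using l by simp
          fix i assume i: "i < length r2"
          then have "i < length (butlast r)" using l by simp
          then have "butlast r ! i = r ! i" by (rule nth_butlast)
          moreover have "r ! i < r2 ! i" using a i unfolding abv_def by auto
          ultimately show "butlast r ! i < r2 ! i" by simp
        qed
        then show ?thesis using Cons by simp
      qed
      have ss: "ssytL T0" using T0' False sb ab Cons.prems(1) by simp
      have "\<forall>a\<in>set (butlast r). a \<le> last r"
      proof -
        have "sorted (butlast r @ [last r])" using sr rne by (simp add: append_butlast_last_id)
        then show ?thesis by (simp add: sorted_append)
      qed
      then have "ins_row (last r) (butlast r) = (None, r)"
        using ins_row_app rne by simp
      then have "ins x T0 = (r # rs, 0)" using T0' x by simp
      with ss 0 rsl T0' x show ?thesis by (simp add: hdrow_def del: ins.simps)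
    qed
  next
    case (Suc k')
    obtain z rs0 where u1: "uns rs k' = (z, rs0)" by fastforce
    obtain x' r0 where u2: "unb_row z r = (x', r0)" by fastforce
    have e: "x = x'" "T0 = r0 # rs0" using Cons.prems(3) Suc u1 u2 by auto
    have cr: "corner rs k'" using Cons.prems(2) Suc by (simp add: corner_def)
    have srs: "ssytL rs" using Cons.prems(1) by simp
    from Cons.IH[OF srs cr u1] have IH: "ssytL rs0" "ins z rs0 = (rs, k')" "rowstep (hd rs) (hdrow rs0) z"
      by auto
    have rsne: "rs \<noteq> []" using cr by (auto simp: corner_def)
    then obtain r2 rs2 where rs: "rs = r2 # rs2" by (cases rs) auto
    have ab: "abv r r2" and sr: "sorted r" and rne: "r \<noteq> []" using Cons.prems(1) rs by auto
    from pair_uns[OF sr rne ab _ u2] IH(3) rs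
    have pu: "hd r < z" "abv r0 (hdrow rs0)" "rowstep r r0 x'" by auto
    have ir: "ins_row x' r0 = (Some z, r)" using R2[OF sr rne pu(1) u2] .
    have sr0: "sorted r0" using R2_sorted[OF sr rne pu(1) u2] .
    have lr0: "r0 \<noteq> []" using unb_row_char[OF sr rne pu(1) u2] rne by auto
    have "ins x' (r0 # rs0) = (r # rs, Suc k')" using ir IH(2) by simp
    moreover have "ssytL (r0 # rs0)"
      using IH(1) sr0 lr0 pu(2) by (cases rs0) (auto simp: hdrow_def)
    ultimately show ?thesis using e Suc pu(3) by (simp add: hdrow_def)
  qed
qed

lemma U2: "ssytL T \<Longrightarrow> uns (fst (ins x T)) (snd (ins x T)) = (x, T)"
proof (induction T arbitrary: x)
  case Nil then show ?case by simp
next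
  case (Cons r rs)
  show ?case
  proof (cases "ins_row x r")
    case (Pair ob r')
    show ?thesis
    proof (cases ob)
      case None
      with Pair have "r' = r @ [x]" using ins_row_None by auto
      with Pair None Cons.prems show ?thesis by auto
    next
      case (Some y)
      obtain rs' k where i: "ins y rs = (rs', k)" by fastforce
      have IH: "uns rs' k = (y, rs)" using Cons.IH[of y] Cons.prems i by simp
      have "unb_row y r' = (x, r)" using R1[of r x y r'] Pair Some Cons.prems by simp
      with IH i Pair Some show ?thesis by simp
    qed
  qed
qed


section \<open>Shapes\<close>

definition addable :: "nat list \<Rightarrow> nat \<Rightarrow> bool" where
  "addable sh k \<longleftrightarrow> k \<le> length sh \<and> (k = 0 \<or> (if k < length sh then sh ! k else 0) < sh ! (k - 1))"

fun shp :: "nat list \<Rightarrow> nat list" where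
  "shp [] = []"
| "shp (k # rho) = addcell (shp rho) k"

fun valid :: "nat list \<Rightarrow> bool" where
  "valid [] = True"
| "valid (k # rho) = (valid rho \<and> addable (shp rho) k)"

lemma length_addcell: "k \<le> length sh \<Longrightarrow> length (addcell sh k) = (if k < length sh then length sh else Suc (length sh))"
  by (simp add: addcell_def)

lemma nth_addcell: "k \<le> length sh \<Longrightarrow> i < length (addcell sh k) \<Longrightarrow>
   addcell sh k ! i = (if i = k then (if k < length sh then Suc (sh ! k) else 1) else sh ! i)"
  by (auto simp: addcell_def nth_append)

lemma ssytL_sorted_shape: "ssytL T \<Longrightarrow> sorted_wrt (\<ge>) (map length T) \<and> 0 \<notin> set (map length T)"
proof (induction T)
  case Nil then show ?case by simp
next
  case (Cons r rs)
  then have IH: "sorted_wrt (\<ge>) (map length rs)" "0 \<notin> set (map length rs)" by auto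
  have "\<forall>y\<in>set (map length rs). y \<le> length r"
  proof (cases rs)
    case Nil then show ?thesis by simp
  next
    case (Cons r2 rs2)
    with Cons.prems have "length r2 \<le> length r" by (simp add: abv_def)
    moreover have "\<forall>y\<in>set (map length rs2). y \<le> length r2" using IH(1) Cons by simp
    ultimately show ?thesis using Cons by auto
  qed
  with IH Cons.prems show ?case by auto
qed

lemma ssytL_sorted_rows: "ssytL T \<Longrightarrow> \<forall>r\<in>set T. sorted r"
  by (induction T) auto

lemma addcell_sorted: "addable sh k \<Longrightarrow> sorted_wrt (\<ge>) sh \<Longrightarrow> sorted_wrt (\<ge>) (addcell sh k)"
proof -
  assume ad: "addable sh k" and s: "sorted_wrt (\<ge>) sh"
  have kl: "k \<le> length sh" using ad by (simp add: addable_def)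
  have tr: "transp ((\<ge>)::nat \<Rightarrow> nat \<Rightarrow> bool)" by (auto simp: transp_def)
  have s': "\<And>i. Suc i < length sh \<Longrightarrow> sh ! Suc i \<le> sh ! i"
    using s sorted_wrt_iff_nth_Suc_transp[OF tr] by auto
  show ?thesis
    unfolding sorted_wrt_iff_nth_Suc_transp[OF tr]
  proof (intro allI impI)
    fix i assume i: "Suc i < length (addcell sh k)"
    show "addcell sh k ! Suc i \<le> addcell sh k ! i"
    proof (cases "k < length sh")
      case True
      then have l: "length (addcell sh k) = length sh" by (simp add: addcell_def)
      show ?thesis
      proof (cases "Suc i = k")
        case True
        then have "0 < k" by simp
        with ad \<open>k < length sh\<close> have "sh ! k < sh ! i" using True[symmetric] by (simp add: addable_def)
        with True i l kl show ?thesis by (simp add: nth_addcell)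
      next
        case False
        have "sh ! Suc i \<le> sh ! i" using s' i l by simp
        with False i l kl \<open>k < length sh\<close> show ?thesis by (auto simp: nth_addcell)
      qed
    next
      case False
      then have k: "k = length sh" using kl by simp
      then have l: "length (addcell sh k) = Suc (length sh)" by (simp add: addcell_def)
      show ?thesis
      proof (cases "Suc i = k")
        case True
        then have "0 < k" by simp
        with ad k have "0 < sh ! (k - 1)" by (simp add: addable_def)
        moreover have "k - 1 = i" using True by simp
        ultimately have "0 < sh ! i" by simp
        with True i l k show ?thesis by (simp add: nth_addcell)
      next
        case False
        then have "Suc i < length sh" using i l k by simp
        then have "sh ! Suc i \<le> sh ! i" using s' by simp
        with False i l k show ?thesis by (simp add: nth_addcell)
      qed
    qed
  qed
qed

lemma addcell_nz: "0 \<notin> set sh \<Longrightarrow> 0 \<notin> set (addcell sh k)"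
  unfolding addcell_def by (auto dest: set_update_subset_insert[THEN subsetD])

lemma sum_addcell: "k \<le> length sh \<Longrightarrow> sum_list (addcell sh k) = Suc (sum_list sh)"
  unfolding addcell_def by (auto simp: sum_list_update)

lemma valid_shape: "valid rho \<Longrightarrow> sorted_wrt (\<ge>) (shp rho) \<and> 0 \<notin> set (shp rho) \<and> sum_list (shp rho) = length rho"
proof (induction rho)
  case Nil then show ?case by simp
next
  case (Cons k rho)
  then have IH: "sorted_wrt (\<ge>) (shp rho)" "0 \<notin> set (shp rho)" "sum_list (shp rho) = length rho"
    and ad: "addable (shp rho) k" by auto
  have "k \<le> length (shp rho)" using ad by (simp add: addable_def)
  with IH ad show ?case by (simp add: addcell_sorted addcell_nz sum_addcell)
qed

lemma ins_addable: "ssytL T \<Longrightarrow> addable (map length T) (snd (ins x T))"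
proof -
  assume s: "ssytL T"
  let ?sh = "map length T" and ?k = "snd (ins x T)"
  have sh: "map length (fst (ins x T)) = addcell ?sh ?k" and kl: "?k \<le> length T"
    using ins_shape by auto
  have "sorted_wrt (\<ge>) (map length (fst (ins x T)))"
    using ssytL_sorted_shape[OF ins_ssyt[OF s]] by simp
  then have so: "sorted_wrt (\<ge>) (addcell ?sh ?k)" using sh by simp
  show ?thesis
    unfolding addable_def
  proof (intro conjI)
    show "?k \<le> length ?sh" using kl by simp
    show "?k = 0 \<or> (if ?k < length ?sh then ?sh ! ?k else 0) < ?sh ! (?k - 1)"
    proof (cases "?k = 0")
      case False
      have kl': "?k \<le> length ?sh" using kl by simp
      have l: "?k < length (addcell ?sh ?k)" using kl' by (simp add: length_addcell)
      have "addcell ?sh ?k ! ?k \<le> addcell ?sh ?k ! (?k - 1)"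
        using so l False by (simp add: sorted_wrt_iff_nth_less)
      with False kl' l show ?thesis by (auto simp: nth_addcell split: if_splits)
    qed simp
  qed
qed

lemma addcell_inj: "addcell a k = addcell b k \<Longrightarrow> k \<le> length a \<Longrightarrow> k \<le> length b \<Longrightarrow>
  0 \<notin> set a \<Longrightarrow> 0 \<notin> set b \<Longrightarrow> a = b"
proof -
  assume e: "addcell a k = addcell b k" and ka: "k \<le> length a" and kb: "k \<le> length b"
    and za: "0 \<notin> set a" and zb: "0 \<notin> set b"
  show "a = b"
  proof (cases "k < length a"; cases "k < length b")
    assume ka': "k < length a" and kb': "k < length b"
    then have l: "length a = length b" using e by (metis length_addcell ka kb)
    show "a = b"
    proof (rule nth_equalityI)
      show "length a = length b" by fact
      fix i assume i: "i < length a"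
      have "addcell a k ! i = addcell b k ! i" using e by simp
      then show "a ! i = b ! i" using i l ka kb ka' kb' by (simp add: nth_addcell length_addcell split: if_splits)
    qed
  next
    assume ka': "k < length a" and kb': "\<not> k < length b"
    then have kb2: "k = length b" using kb by simp
    have l: "length a = Suc (length b)" using e ka kb ka' kb' by (metis length_addcell)
    have "addcell a k ! k = addcell b k ! k" using e by simp
    then have "Suc (a ! k) = 1" using ka' kb2 ka kb by (simp add: nth_addcell length_addcell)
    then have "a ! k = 0" by simp
    with ka' za show "a = b" by (metis nth_mem)
  next
    assume ka': "\<not> k < length a" and kb': "k < length b"
    then have ka2: "k = length a" using ka by simp
    have "addcell a k ! k = addcell b k ! k" using e by simp
    then have "Suc (b ! k) = 1" using kb' ka2 ka kb by (simp add: nth_addcell length_addcell)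
    then have "b ! k = 0" by simp
    with kb' zb show "a = b" by (metis nth_mem)
  next
    assume "\<not> k < length a" "\<not> k < length b"
    then show "a = b" using e by (simp add: addcell_def)
  qed
qed

lemma addcell_corner: "addable sh k \<Longrightarrow> sorted_wrt (\<ge>) sh \<Longrightarrow> map length P = addcell sh k \<Longrightarrow> corner P k"
proof -
  assume ad: "addable sh k" and s: "sorted_wrt (\<ge>) sh" and e: "map length P = addcell sh k"
  have kl: "k \<le> length sh" using ad by (simp add: addable_def)
  have lP: "length P = length (addcell sh k)" using e by (metis length_map)
  have lj: "length (P ! j) = addcell sh k ! j" if "j < length P" for j
  proof -
    have "map length P ! j = length (P ! j)" using that by simp
    then show ?thesis using e by simp
  qed
  show ?thesis
    unfolding corner_def
  proof
    show "k < length P" using lP kl by (simp add: length_addcell)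
    show "Suc k = length P \<or> length (P ! Suc k) < length (P ! k)"
    proof (cases "Suc k < length sh")
      case True
      have lPs: "length P = length sh" using lP True by (simp add: length_addcell)
      have "length (P ! Suc k) = addcell sh k ! Suc k" using lj lPs True by simp
      also have "\<dots> = sh ! Suc k" using True kl by (simp add: nth_addcell length_addcell)
      also have "\<dots> \<le> sh ! k" using s True by (simp add: sorted_wrt_iff_nth_less)
      also have "\<dots> < Suc (sh ! k)" by simp
      also have "Suc (sh ! k) = addcell sh k ! k" using True kl by (simp add: nth_addcell length_addcell)
      also have "\<dots> = length (P ! k)" using lj lPs True by simp
      finally show ?thesis by simp
    next
      case False
      then show ?thesis using lP kl by (auto simp: length_addcell)
    qed
  qed
qed

section \<open>RSK\<close>

fun rsk :: "nat list \<Rightarrow> nat list list \<times> nat list" where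
  "rsk [] = ([], [])"
| "rsk (x # v) = (case rsk v of (P, rho) \<Rightarrow> (case ins x P of (P', k) \<Rightarrow> (P', k # rho)))"

lemma rsk_props: "rsk v = (P, rho) \<Longrightarrow> ssytL P \<and> valid rho \<and> shp rho = map length P \<and>
   mset (concat P) = mset v \<and> length rho = length v"
proof (induction v arbitrary: P rho)
  case Nil then show ?case by simp
next
  case (Cons x v)
  obtain P0 rho0 where r0: "rsk v = (P0, rho0)" by fastforce
  obtain P1 k where i: "ins x P0 = (P1, k)" by fastforce
  have e: "P = P1" "rho = k # rho0" using Cons.prems r0 i by auto
  from Cons.IH[OF r0] have IH: "ssytL P0" "valid rho0" "shp rho0 = map length P0"
    "mset (concat P0) = mset v" "length rho0 = length v" by auto
  have "ssytL P1" using ins_ssyt[OF IH(1), of x] i by simp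
  moreover have "addable (shp rho0) k" using ins_addable[OF IH(1), of x] i IH(3) by simp
  moreover have "map length P1 = addcell (map length P0) k" using ins_shape[of x P0] i by simp
  moreover have "mset (concat P1) = add_mset x (mset (concat P0))" using ins_mset[of x P0] i by simp
  ultimately show ?case using e IH by simp
qed

lemma rsk_len: "length (snd (rsk v)) = length v"
  by (induction v) (auto split: prod.splits)

lemma rsk_inj: "rsk v = rsk u \<Longrightarrow> v = u"
proof (induction v arbitrary: u)
  case Nil
  then have "snd (rsk u) = []" by (metis rsk.simps(1) snd_conv)
  then have "length (snd (rsk u)) = 0" by simp
  then show ?case using rsk_len[of u] by simp
next
  case (Cons x v)
  obtain P0 rho0 where r0: "rsk v = (P0, rho0)" by fastforce
  obtain P1 k where i: "ins x P0 = (P1, k)" by fastforce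
  have lu: "length u = Suc (length v)"
    using rsk_len[of u] rsk_len[of "x # v"] Cons.prems by simp
  then obtain y u' where u: "u = y # u'" by (cases u) auto
  obtain Q0 sig0 where s0: "rsk u' = (Q0, sig0)" by fastforce
  obtain Q1 k' where j: "ins y Q0 = (Q1, k')" by fastforce
  from Cons.prems r0 i s0 j u have e: "P1 = Q1" "k = k'" "rho0 = sig0" by auto
  have "uns P1 k = (x, P0)" using U2[of P0 x] i rsk_props[OF r0] by simp
  moreover have "uns Q1 k' = (y, Q0)" using U2[of Q0 y] j rsk_props[OF s0] by simp
  ultimately have "x = y" "P0 = Q0" using e by auto
  then have "rsk v = rsk u'" using r0 s0 e by simp
  with Cons.IH \<open>x = y\<close> u show ?case by simp
qed

lemma rsk_surj: "ssytL P \<Longrightarrow> valid rho \<Longrightarrow> shp rho = map length P \<Longrightarrow> \<exists>v. rsk v = (P, rho)"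
proof (induction rho arbitrary: P)
  case Nil
  then have "P = []" by simp
  then show ?case by (intro exI[of _ "[]"]) simp
next
  case (Cons k rho)
  have ad: "addable (shp rho) k" and vr: "valid rho" using Cons.prems by auto
  from valid_shape[OF vr] have so: "sorted_wrt (\<ge>) (shp rho)" and nz: "0 \<notin> set (shp rho)" by auto
  have e: "map length P = addcell (shp rho) k" using Cons.prems by simp
  have co: "corner P k" using addcell_corner[OF ad so e] .
  obtain x P0 where u: "uns P k = (x, P0)" by fastforce
  from U1[OF Cons.prems(1) co u] have s0: "ssytL P0" and i: "ins x P0 = (P, k)" by auto
  have "map length P = addcell (map length P0) k" and kl: "k \<le> length P0"
    using ins_shape[of x P0] i by auto
  then have "shp rho = map length P0"
    using addcell_inj[of "shp rho" k "map length P0"] e ad nz ssytL_sorted_shape[OF s0]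
    by (auto simp: addable_def)
  from Cons.IH[OF s0 vr this] obtain v where "rsk v = (P0, rho)" by blast
  then have "rsk (x # v) = (P, k # rho)" using i by simp
  then show ?case by blast
qed

section \<open>Row bumping lemma\<close>

lemma R3: "sorted r \<Longrightarrow> ins_row y r = (Some y1, r1) \<Longrightarrow>
  (x < y \<longrightarrow> (\<exists>x1 r2. ins_row x r1 = (Some x1, r2) \<and> x1 < y1)) \<and>
  (y \<le> x \<longrightarrow> (\<forall>x1 r2. ins_row x r1 = (Some x1, r2) \<longrightarrow> y1 \<le> x1))"
proof (induction r arbitrary: r1)
  case Nil then show ?case by simp
next
  case (Cons c r')
  show ?case
  proof (cases "y < c")
    case True
    with Cons.prems have e: "y1 = c" "r1 = y # r'" by auto
    show ?thesis
    proof (intro conjI impI allI)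
      assume "x < y"
      then show "\<exists>x1 r2. ins_row x r1 = (Some x1, r2) \<and> x1 < y1" using e True by auto
    next
      fix x1 r2 assume yx: "y \<le> x" and i: "ins_row x r1 = (Some x1, r2)"
      then obtain r3 where "ins_row x r' = (Some x1, r3)" using e by (auto split: prod.splits)
      then have "x1 \<in> set r'" using ins_row_Some by blast
      then show "y1 \<le> x1" using Cons.prems(1) e by auto
    qed
  next
    case False
    with Cons.prems obtain r1' where e: "ins_row y r' = (Some y1, r1')" "r1 = c # r1'"
      by (auto split: prod.splits)
    have IH: "(x < y \<longrightarrow> (\<exists>x1 r2. ins_row x r1' = (Some x1, r2) \<and> x1 < y1)) \<and>
      (y \<le> x \<longrightarrow> (\<forall>x1 r2. ins_row x r1' = (Some x1, r2) \<longrightarrow> y1 \<le> x1))"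
      using Cons.IH[OF _ e(1)] Cons.prems(1) by simp
    have yy1: "y < y1" using ins_row_Some[OF e(1)] by simp
    show ?thesis
    proof (intro conjI impI allI)
      assume xy: "x < y"
      show "\<exists>x1 r2. ins_row x r1 = (Some x1, r2) \<and> x1 < y1"
      proof (cases "x < c")
        case True
        then show ?thesis using e False yy1 by auto
      next
        case False
        from IH xy obtain x1 r2 where "ins_row x r1' = (Some x1, r2)" "x1 < y1" by blast
        then show ?thesis using e False by auto
      qed
    next
      fix x1 r2 assume yx: "y \<le> x" and i: "ins_row x r1 = (Some x1, r2)"
      have "\<not> x < c" using yx False by simp
      with i e obtain r3 where "ins_row x r1' = (Some x1, r3)" by (auto split: prod.splits)
      with IH yx show "y1 \<le> x1" by blast
    qed
  qed
qed

lemma ins_row_exists_Some: "a \<in> set r \<Longrightarrow> x < a \<Longrightarrow> \<exists>y r'. ins_row x r = (Some y, r')"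
proof -
  assume a: "a \<in> set r" "x < a"
  obtain ob r' where e: "ins_row x r = (ob, r')" by fastforce
  show ?thesis
  proof (cases ob)
    case None
    with e have "\<forall>a\<in>set r. a \<le> x" using ins_row_None by blast
    with a show ?thesis by auto
  qed (use e in auto)
qed

lemma bump: "\<forall>r\<in>set T. sorted r \<Longrightarrow> ins y T = (T1, a) \<Longrightarrow> ins x T1 = (T2, b) \<Longrightarrow>
  (x < y \<longrightarrow> a < b) \<and> (y \<le> x \<longrightarrow> b \<le> a)"
proof (induction T arbitrary: x y T1 T2 a b)
  case Nil
  then show ?case by (cases "x < y") auto
next
  case (Cons r rs)
  obtain ob r1 where iy: "ins_row y r = (ob, r1)" by fastforce
  show ?case
  proof (cases ob)
    case None
    with iy have r1: "r1 = r @ [y]" and le: "\<forall>c\<in>set r. c \<le> y" using ins_row_None by auto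
    have e: "T1 = r1 # rs" "a = 0" using Cons.prems(2) iy None by auto
    show ?thesis
    proof (intro conjI impI)
      assume "x < y"
      then obtain z r2 where "ins_row x r1 = (Some z, r2)" using ins_row_exists_Some[of y r1 x] r1 by auto
      then show "a < b" using Cons.prems(3) e by (auto split: prod.splits)
    next
      assume "y \<le> x"
      then have "\<forall>c\<in>set r1. c \<le> x" using le r1 by auto
      then have "ins_row x r1 = (None, r1 @ [x])" by (rule ins_row_app)
      then show "b \<le> a" using Cons.prems(3) e by auto
    qed
  next
    case (Some y1)
    obtain rs1 a' where iy2: "ins y1 rs = (rs1, a')" by fastforce
    have e: "T1 = r1 # rs1" "a = Suc a'" using Cons.prems(2) iy Some iy2 by auto
    have sr: "sorted r" using Cons.prems(1) by simp
    note R = R3[OF sr iy[unfolded Some], of x]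
    obtain ob2 r2 where ix: "ins_row x r1 = (ob2, r2)" by fastforce
    show ?thesis
    proof (cases ob2)
      case None
      then have "b = 0" using Cons.prems(3) e ix by auto
      moreover have "\<not> x < y" using R ix None by auto
      ultimately show ?thesis by simp
    next
      case (Some x1)
      obtain rs2 b' where ix2: "ins x1 rs1 = (rs2, b')" by fastforce
      have eb: "b = Suc b'" using Cons.prems(3) e ix Some ix2 by auto
      have IH: "(x1 < y1 \<longrightarrow> a' < b') \<and> (y1 \<le> x1 \<longrightarrow> b' \<le> a')"
        using Cons.IH[OF _ iy2 ix2] Cons.prems(1) by simp
      show ?thesis
      proof (intro conjI impI)
        assume "x < y"
        then have "x1 < y1" using R ix Some by auto
        then show "a < b" using IH e eb by simp
      next
        assume "y \<le> x"
        then have "y1 \<le> x1" using R ix Some by auto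
        then show "b \<le> a" using IH e eb by simp
      qed
    qed
  qed
qed

section \<open>Descents\<close>

definition Dset :: "('b \<Rightarrow> 'b \<Rightarrow> bool) \<Rightarrow> 'b list \<Rightarrow> nat set" where
  "Dset R w = {i. 1 \<le> i \<and> i < length w \<and> R (w ! (i - 1)) (w ! i)}"

lemma Dset_single: "Dset R [x] = {}" by (auto simp: Dset_def)

lemma Dset_snoc: "Dset R (rev (x # y # v)) = Dset R (rev (y # v)) \<union> (if R y x then {Suc (length v)} else {})"
proof -
  have e: "rev (x # y # v) = rev (y # v) @ [x]" by simp
  show ?thesis
  proof (rule set_eqI)
    fix i
    show "i \<in> Dset R (rev (x # y # v)) \<longleftrightarrow> i \<in> Dset R (rev (y # v)) \<union> (if R y x then {Suc (length v)} else {})"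
    proof (cases "i = Suc (length v)")
      case True
      have "rev (y # v) ! length v = y" by (simp add: nth_append)
      then show ?thesis using True unfolding Dset_def by (auto simp: nth_append)
    next
      case False
      show ?thesis
      proof (cases "i < Suc (length v)")
        case True
        then show ?thesis using False unfolding e Dset_def by (auto simp: nth_append)
      next
        case False
        then show ?thesis using \<open>i \<noteq> Suc (length v)\<close> unfolding Dset_def by auto
      qed
    qed
  qed
qed

lemma rsk_des: "rsk v = (P, rho) \<Longrightarrow> Dset (\<lambda>a b. b < a) (rev v) = Dset (\<lambda>a b. a < b) (rev rho)"
proof (induction v arbitrary: P rho)
  case Nil then show ?case by (simp add: Dset_def)
next
  case (Cons x v)
  obtain P0 rho0 where r0: "rsk v = (P0, rho0)" by fastforce
  obtain P1 k where i: "ins x P0 = (P1, k)" by fastforce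
  have e: "P = P1" "rho = k # rho0" using Cons.prems r0 i by auto
  show ?case
  proof (cases v)
    case Nil
    then have "rho0 = []" using r0 by simp
    then show ?thesis using e Nil by (simp add: Dset_single)
  next
    case (Cons y v')
    obtain P00 rho00 where r00: "rsk v' = (P00, rho00)" by fastforce
    obtain k0 where i0: "ins y P00 = (P0, k0)" and rr: "rho0 = k0 # rho00"
      using r0 r00 Cons by (auto split: prod.splits)
    have s00: "\<forall>r\<in>set P00. sorted r" using rsk_props[OF r00] ssytL_sorted_rows by blast
    have bp: "(x < y \<longrightarrow> k0 < k) \<and> (y \<le> x \<longrightarrow> k \<le> k0)" using bump[OF s00 i0 i] .
    have lv: "length rho00 = length v'" using rsk_props[OF r00] by simp
    have IH: "Dset (\<lambda>a b. b < a) (rev (y # v')) = Dset (\<lambda>a b. a < b) (rev (k0 # rho00))"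
      using Cons.IH[OF r0] Cons rr by simp
    have xk: "(x < y) = (k0 < k)" using bp by auto
    have A: "Dset (\<lambda>a b. b < a) (rev (x # y # v')) = Dset (\<lambda>a b. b < a) (rev (y # v')) \<union>
      (if x < y then {Suc (length v')} else {})"
      using Dset_snoc[of "\<lambda>a b. b < a" x y v'] by simp
    have B: "Dset (\<lambda>a b. a < b) (rev (k # k0 # rho00)) = Dset (\<lambda>a b. a < b) (rev (k0 # rho00)) \<union>
      (if k0 < k then {Suc (length rho00)} else {})"
      using Dset_snoc[of "\<lambda>a b. a < b" k k0 rho00] by simp
    have "Dset (\<lambda>a b. b < a) (rev (x # y # v')) = Dset (\<lambda>a b. a < b) (rev (k # k0 # rho00))"
      unfolding A B IH xk lv by simp
    then show ?thesis using e rr Cons by simp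
  qed
qed

section \<open>Recording sequences as quasi-Yamanouchi tableaux\<close>

definition Cs :: "nat list \<Rightarrow> (nat \<times> nat) set" where
  "Cs rho = {(r, c). c < count_list rho r}"

lemma Cs_Nil[simp]: "Cs [] = {}" by (simp add: Cs_def)

lemma Cs_Cons: "Cs (k # rho) = insert (k, count_list rho k) (Cs rho)"
  unfolding Cs_def by (auto split: if_splits)

lemma hcell_notin: "(k, count_list rho k) \<notin> Cs rho"
  by (simp add: Cs_def)

lemma finite_Cs: "finite (Cs rho)"
  by (induction rho) (auto simp: Cs_Cons)

lemma card_Cs: "card (Cs rho) = length rho"
  by (induction rho) (auto simp: Cs_Cons finite_Cs hcell_notin)

lemma Cs_Cons_mem: "p \<in> Cs (k # rho) \<Longrightarrow> p \<noteq> (k, count_list rho k) \<Longrightarrow> p \<in> Cs rho"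
  by (simp add: Cs_Cons)

lemma shp_count: "valid rho \<Longrightarrow> count_list rho k = (if k < length (shp rho) then shp rho ! k else 0)"
proof (induction rho arbitrary: k)
  case Nil then show ?case by simp
next
  case (Cons k' rho)
  then have IH: "\<And>k. count_list rho k = (if k < length (shp rho) then shp rho ! k else 0)"
    and kl: "k' \<le> length (shp rho)" by (auto simp: addable_def)
  show ?case
    using IH[of k] kl by (auto simp: nth_addcell length_addcell)
qed

lemma cells_shp: "valid rho \<Longrightarrow> cells (shp rho) = Cs rho"
  unfolding cells_def Cs_def by (auto simp: shp_count split: if_splits)

lemma ballot: "valid rho \<Longrightarrow> r1 \<le> r2 \<Longrightarrow> count_list rho r2 \<le> count_list rho r1"
proof -
  assume v: "valid rho" and r: "r1 \<le> r2"
  have s: "sorted_wrt (\<ge>) (shp rho)" using valid_shape[OF v] by simp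
  show ?thesis
  proof (cases "r2 < length (shp rho)")
    case True
    then have "shp rho ! r2 \<le> shp rho ! r1"
      using s r by (cases "r1 = r2") (auto simp: sorted_wrt_iff_nth_less)
    then show ?thesis using shp_count[OF v, of r1] shp_count[OF v, of r2] True r by simp
  next
    case False
    then show ?thesis using shp_count[OF v, of r2] by simp
  qed
qed

fun qval :: "nat list \<Rightarrow> nat" where
  "qval [] = 0"
| "qval [k] = 1"
| "qval (k # j # rho) = qval (j # rho) + (if j < k then 1 else 0)"

fun qmap :: "nat list \<Rightarrow> nat \<times> nat \<Rightarrow> nat" where
  "qmap [] = (\<lambda>_. 0)"
| "qmap (k # rho) = (qmap rho)((k, count_list rho k) := qval (k # rho))"

fun smap :: "nat list \<Rightarrow> nat \<times> nat \<Rightarrow> nat" where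
  "smap [] = (\<lambda>_. 0)"
| "smap (k # rho) = (smap rho)((k, count_list rho k) := Suc (length rho))"

lemma qval_pos: "rho \<noteq> [] \<Longrightarrow> 1 \<le> qval rho"
  by (induction rho rule: qval.induct) auto

lemma qval_mono: "qval rho \<le> qval (k # rho)"
  by (cases rho) auto

lemma qmap_out: "p \<notin> Cs rho \<Longrightarrow> qmap rho p = 0"
  by (induction rho) (auto simp: Cs_Cons)

lemma smap_out: "p \<notin> Cs rho \<Longrightarrow> smap rho p = 0"
  by (induction rho) (auto simp: Cs_Cons)

lemma qmap_bounds: "p \<in> Cs rho \<Longrightarrow> 1 \<le> qmap rho p \<and> qmap rho p \<le> qval rho"
proof (induction rho)
  case Nil then show ?case by simp
next
  case (Cons k rho)
  show ?case
  proof (cases "p = (k, count_list rho k)")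
    case True then show ?thesis using qval_pos[of "k # rho"] by simp
  next
    case False
    then have "p \<in> Cs rho" using Cons.prems by (simp add: Cs_Cons)
    with Cons.IH have "1 \<le> qmap rho p \<and> qmap rho p \<le> qval rho" by simp
    with False qval_mono[of rho k] show ?thesis by simp
  qed
qed

lemma valid_tl: "valid (k # rho) \<Longrightarrow> valid rho" by simp

lemma I4: "valid rho \<Longrightarrow> rho \<noteq> [] \<Longrightarrow> p \<in> Cs rho \<Longrightarrow> qmap rho p = qval rho \<Longrightarrow>
  snd p \<le> count_list (tl rho) (hd rho)"
proof (induction rho arbitrary: p)
  case Nil then show ?case by simp
next
  case (Cons k rho)
  show ?case
  proof (cases "p = (k, count_list rho k)")
    case True then show ?thesis by simp
  next
    case False
    then have p: "p \<in> Cs rho" using Cons.prems by (simp add: Cs_Cons)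
    then have rne: "rho \<noteq> []" by auto
    then obtain j rho0 where rj: "rho = j # rho0" by (cases rho) auto
    have qp: "qmap rho p = qval (k # rho)" using Cons.prems(4) False by simp
    have b: "qmap rho p \<le> qval rho" using qmap_bounds[OF p] by simp
    have kj: "\<not> j < k"
    proof
      assume "j < k"
      then have "qval (k # rho) = qval rho + 1" using rj by simp
      with qp b show False by simp
    qed
    then have "qval (k # rho) = qval rho" using rj by simp
    then have "snd p \<le> count_list rho0 j" using Cons.IH[OF _ rne p] Cons.prems(1) qp rj by simp
    also have "\<dots> \<le> count_list rho j" using rj by simp
    also have "\<dots> \<le> count_list rho k" using ballot[of rho k j] Cons.prems(1) kj by simp
    finally show ?thesis by simp
  qed
qed

lemma I4': "valid (k # rho) \<Longrightarrow> rho = j # rho0 \<Longrightarrow> k \<le> j \<Longrightarrow> p \<in> Cs rho \<Longrightarrow> qmap rho p = qval rho \<Longrightarrow>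
  snd p < count_list rho k"
proof -
  assume v: "valid (k # rho)" and rj: "rho = j # rho0" and kj: "k \<le> j" and p: "p \<in> Cs rho"
    and q: "qmap rho p = qval rho"
  have "snd p \<le> count_list rho0 j" using I4[OF valid_tl[OF v] _ p q] rj by simp
  also have "\<dots> < count_list rho j" using rj by simp
  also have "\<dots> \<le> count_list rho k" using ballot[OF valid_tl[OF v] kj] .
  finally show ?thesis .
qed

definition ssytC :: "(nat \<times> nat) set \<Rightarrow> (nat \<times> nat \<Rightarrow> nat) \<Rightarrow> bool" where
  "ssytC C T \<longleftrightarrow>
     (\<forall>p. p \<notin> C \<longrightarrow> T p = 0) \<and>
     (\<forall>p\<in>C. 1 \<le> T p) \<and>
     (\<forall>r c. (r, c) \<in> C \<and> (r, Suc c) \<in> C \<longrightarrow> T (r, c) \<le> T (r, Suc c)) \<and>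
     (\<forall>r c. (r, c) \<in> C \<and> (Suc r, c) \<in> C \<longrightarrow> T (r, c) < T (Suc r, c))"

lemma ssyt_C: "ssyt nu T = ssytC (cells nu) T"
  by (simp add: ssyt_def ssytC_def)

lemma ssytC_qmap: "valid rho \<Longrightarrow> ssytC (Cs rho) (qmap rho)"
proof (induction rho)
  case Nil then show ?case by (simp add: ssytC_def)
next
  case (Cons k rho)
  let ?m = "count_list rho k" and ?T = "qmap rho"
  let ?n = "(k, ?m)" and ?v = "qval (k # rho)"
  have IH: "ssytC (Cs rho) ?T" using Cons by simp
  have vr: "valid rho" using Cons.prems by simp
  have T': "qmap (k # rho) = ?T(?n := ?v)" by simp
  have vge: "qval rho \<le> ?v" by (rule qval_mono)
  have mem: "\<And>p. p \<in> Cs (k # rho) \<Longrightarrow> p \<noteq> ?n \<Longrightarrow> p \<in> Cs rho" by (simp add: Cs_Cons)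
  show ?case
    unfolding ssytC_def
  proof (intro conjI allI impI ballI)
    fix p assume "p \<notin> Cs (k # rho)"
    then show "qmap (k # rho) p = 0" by (rule qmap_out)
  next
    fix p assume "p \<in> Cs (k # rho)"
    then show "1 \<le> qmap (k # rho) p" using qmap_bounds by blast
  next
    fix r c assume a: "(r, c) \<in> Cs (k # rho) \<and> (r, Suc c) \<in> Cs (k # rho)"
    show "qmap (k # rho) (r, c) \<le> qmap (k # rho) (r, Suc c)"
    proof (cases "(r, Suc c) = ?n")
      case True
      then have rc: "(r, c) \<in> Cs rho" using True by (auto simp: Cs_def)
      then have "?T (r, c) \<le> qval rho" using qmap_bounds by blast
      moreover have "(r, c) \<noteq> ?n" using True by auto
      ultimately show ?thesis using True vge T' by simp
    next
      case False
      have "(r, c) \<noteq> ?n"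
      proof
        assume e: "(r, c) = ?n"
        have "(r, Suc c) \<in> Cs (k # rho)" using a by simp
        then show False using e by (simp add: Cs_def)
      qed
      then have "(r, c) \<in> Cs rho" "(r, Suc c) \<in> Cs rho" using mem a False by auto
      then have "?T (r, c) \<le> ?T (r, Suc c)" using IH unfolding ssytC_def by blast
      then show ?thesis unfolding T' fun_upd_other[OF False] fun_upd_other[OF \<open>(r, c) \<noteq> ?n\<close>] .
    qed
  next
    fix r c assume a: "(r, c) \<in> Cs (k # rho) \<and> (Suc r, c) \<in> Cs (k # rho)"
    show "qmap (k # rho) (r, c) < qmap (k # rho) (Suc r, c)"
    proof (cases "(Suc r, c) = ?n")
      case True
      then have kr: "k = Suc r" "c = ?m" by auto
      have rc: "(r, c) \<noteq> ?n" using kr by auto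
      then have rc': "(r, c) \<in> Cs rho" using mem a by auto
      then have rne: "rho \<noteq> []" by auto
      then obtain j rho0 where rj: "rho = j # rho0" by (cases rho) auto
      have b: "?T (r, c) \<le> qval rho" using qmap_bounds[OF rc'] by simp
      have "?T (r, c) < ?v"
      proof (cases "j < k")
        case True
        then have "?v = qval rho + 1" using rj by simp
        with b show ?thesis by simp
      next
        case False
        then have ev: "?v = qval rho" using rj by simp
        have "?T (r, c) \<noteq> qval rho"
        proof
          assume "?T (r, c) = qval rho"
          from I4'[OF Cons.prems rj _ rc' this] False kr show False by simp
        qed
        with b ev show ?thesis by simp
      qed
      then show ?thesis using True rc by simp
    next
      case False
      have "(r, c) \<noteq> ?n"
      proof
        assume e: "(r, c) = ?n"
        have "(Suc r, c) \<in> Cs (k # rho)" using a by simp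
        then have "c < count_list rho (Suc k)" using e by (simp add: Cs_def)
        moreover have "count_list rho (Suc k) \<le> count_list rho k" using ballot[OF vr, of k "Suc k"] by simp
        ultimately show False using e by simp
      qed
      then have "(r, c) \<in> Cs rho" "(Suc r, c) \<in> Cs rho" using mem a False by auto
      then have "?T (r, c) < ?T (Suc r, c)" using IH unfolding ssytC_def by blast
      then show ?thesis unfolding T' fun_upd_other[OF False] fun_upd_other[OF \<open>(r, c) \<noteq> ?n\<close>] .
    qed
  qed
qed

definition qytC :: "(nat \<times> nat) set \<Rightarrow> (nat \<times> nat \<Rightarrow> nat) \<Rightarrow> bool" where
  "qytC C T \<longleftrightarrow> (\<forall>p\<in>C. 2 \<le> T p \<longrightarrow>
        (\<exists>p1\<in>C. \<exists>p2\<in>C. T p1 = T p \<and> T p2 = T p - 1 \<and> fst p1 > fst p2))"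

lemma qyt_C: "qyt nu T = (ssytC (cells nu) T \<and> qytC (cells nu) T)"
  by (simp add: qyt_def ssyt_C qytC_def)

lemma qytC_qmap: "valid rho \<Longrightarrow> qytC (Cs rho) (qmap rho)"
proof (induction rho)
  case Nil then show ?case by (simp add: qytC_def)
next
  case (Cons k rho)
  let ?m = "count_list rho k" and ?T = "qmap rho"
  let ?n = "(k, ?m)" and ?v = "qval (k # rho)"
  have IH: "qytC (Cs rho) ?T" using Cons by simp
  have T': "qmap (k # rho) = ?T(?n := ?v)" by simp
  have sub: "Cs rho \<subseteq> Cs (k # rho)" by (auto simp: Cs_Cons)
  have nn: "\<And>p. p \<in> Cs rho \<Longrightarrow> p \<noteq> ?n" using hcell_notin by blast
  show ?case
    unfolding qytC_def
  proof (intro ballI impI)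
    fix p assume p: "p \<in> Cs (k # rho)" and v2: "2 \<le> qmap (k # rho) p"
    show "\<exists>p1\<in>Cs (k # rho). \<exists>p2\<in>Cs (k # rho). qmap (k # rho) p1 = qmap (k # rho) p \<and>
        qmap (k # rho) p2 = qmap (k # rho) p - 1 \<and> fst p2 < fst p1"
    proof (cases "p = ?n")
      case False
      then have pc: "p \<in> Cs rho" using p by (simp add: Cs_Cons)
      then have "2 \<le> ?T p" using v2 False by simp
      with IH pc obtain p1 p2 where w: "p1 \<in> Cs rho" "p2 \<in> Cs rho" "?T p1 = ?T p" "?T p2 = ?T p - 1" "fst p2 < fst p1"
        unfolding qytC_def by blast
      show ?thesis
        by (rule bexI[of _ p1], rule bexI[of _ p2]) (use w sub nn False in auto)
    next
      case True
      then have v2': "2 \<le> ?v" using v2 by simp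
      have rne: "rho \<noteq> []"
      proof
        assume "rho = []" then have "?v = 1" by simp
        with v2' show False by simp
      qed
      then obtain j rho0 where rj: "rho = j # rho0" by (cases rho) auto
      let ?h = "(j, count_list rho0 j)"
      have hC: "?h \<in> Cs rho" using rj by (simp add: Cs_Cons)
      have Th: "?T ?h = qval rho" using rj by simp
      show ?thesis
      proof (cases "j < k")
        case True
        then have ev: "?v = qval rho + 1" using rj by simp
        have hn: "?h \<noteq> ?n" using nn[OF hC] .
        have e1: "qmap (k # rho) ?h = qval rho" unfolding T' fun_upd_other[OF hn] by (rule Th)
        have e2: "qmap (k # rho) p = qval rho + 1" using \<open>p = ?n\<close> ev by simp
        have nC: "?n \<in> Cs (k # rho)" by (simp add: Cs_Cons)
        show ?thesis
          by (rule bexI[OF _ nC], rule bexI[of _ ?h]) (use e1 e2 True \<open>p = ?n\<close> hC sub in auto)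
      next
        case False
        then have ev: "?v = qval rho" using rj by simp
        then have "2 \<le> ?T ?h" using Th v2' by simp
        with IH hC obtain p1 p2 where w: "p1 \<in> Cs rho" "p2 \<in> Cs rho" "?T p1 = ?T ?h" "?T p2 = ?T ?h - 1" "fst p2 < fst p1"
          unfolding qytC_def by blast
        show ?thesis
          by (rule bexI[of _ p1], rule bexI[of _ p2]) (use w sub nn True ev Th in auto)
      qed
    qed
  qed
qed

lemma qyt_qmap: "valid rho \<Longrightarrow> qyt (shp rho) (qmap rho)"
  using ssytC_qmap qytC_qmap cells_shp qyt_C by simp


lemma qmap_facts: "valid (k # rho) \<Longrightarrow> q \<in> Cs rho \<Longrightarrow>
   qmap rho q \<le> qval (k # rho) \<and> (qmap rho q = qval (k # rho) \<longrightarrow> snd q < count_list rho k)"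
proof -
  assume v: "valid (k # rho)" and q: "q \<in> Cs rho"
  then have rne: "rho \<noteq> []" by auto
  then obtain j rho0 where rj: "rho = j # rho0" by (cases rho) auto
  have b: "qmap rho q \<le> qval rho" using qmap_bounds[OF q] by simp
  show ?thesis
  proof (cases "j < k")
    case True
    then have "qval (k # rho) = qval rho + 1" using rj by simp
    with b show ?thesis by simp
  next
    case False
    then have ev: "qval (k # rho) = qval rho" using rj by simp
    have "qmap rho q = qval rho \<longrightarrow> snd q < count_list rho k"
      using I4'[OF v rj _ q] False by simp
    with b ev show ?thesis by simp
  qed
qed

lemma std_qmap_aux: "valid rho \<Longrightarrow> p \<in> Cs rho \<Longrightarrow>
  card {q \<in> Cs rho. qmap rho q < qmap rho p} + card {q \<in> Cs rho. qmap rho q = qmap rho p \<and> snd q < snd p} + 1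
   = smap rho p"
proof (induction rho arbitrary: p)
  case Nil then show ?case by simp
next
  case (Cons k rho)
  let ?m = "count_list rho k" and ?T = "qmap rho"
  let ?n = "(k, ?m)" and ?v = "qval (k # rho)"
  have T': "qmap (k # rho) = ?T(?n := ?v)" by simp
  have C': "Cs (k # rho) = insert ?n (Cs rho)" by (rule Cs_Cons)
  have nn: "?n \<notin> Cs rho" by (rule hcell_notin)
  have F: "\<And>q. q \<in> Cs rho \<Longrightarrow> ?T q \<le> ?v \<and> (?T q = ?v \<longrightarrow> snd q < ?m)"
    using qmap_facts[OF Cons.prems(1)] by blast
  have Tq: "\<And>q. q \<in> Cs rho \<Longrightarrow> qmap (k # rho) q = ?T q"
    using nn by (auto simp del: qmap.simps simp: T')
  show ?case
  proof (cases "p = ?n")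
    case True
    have Tp: "qmap (k # rho) p = ?v" using True by simp
    have A: "{q \<in> Cs (k # rho). qmap (k # rho) q < qmap (k # rho) p} = {q \<in> Cs rho. ?T q < ?v}"
      unfolding C' Tp using Tq nn by auto
    have B: "{q \<in> Cs (k # rho). qmap (k # rho) q = qmap (k # rho) p \<and> snd q < snd p} = {q \<in> Cs rho. ?T q = ?v}"
      unfolding C' Tp using Tq F True nn by auto
    have U: "{q \<in> Cs rho. ?T q < ?v} \<union> {q \<in> Cs rho. ?T q = ?v} = Cs rho" using F by force
    have "card {q \<in> Cs rho. ?T q < ?v} + card {q \<in> Cs rho. ?T q = ?v} = card (Cs rho)"
    proof -
      have d: "{q \<in> Cs rho. ?T q < ?v} \<inter> {q \<in> Cs rho. ?T q = ?v} = {}" by auto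
      have "card ({q \<in> Cs rho. ?T q < ?v} \<union> {q \<in> Cs rho. ?T q = ?v}) =
         card {q \<in> Cs rho. ?T q < ?v} + card {q \<in> Cs rho. ?T q = ?v}"
        by (rule card_Un_disjoint) (use finite_Cs[of rho] d in auto)
      then show ?thesis using U by simp
    qed
    then show ?thesis unfolding A B using True card_Cs[of rho] by simp
  next
    case False
    then have pC: "p \<in> Cs rho" using Cons.prems(2) by (simp add: Cs_Cons)
    have Tp: "qmap (k # rho) p = ?T p" using Tq[OF pC] .
    have Fp: "?T p \<le> ?v" "?T p = ?v \<longrightarrow> snd p < ?m" using F[OF pC] by auto
    have A: "{q \<in> Cs (k # rho). qmap (k # rho) q < qmap (k # rho) p} = {q \<in> Cs rho. ?T q < ?T p}"
      unfolding C' Tp using Tq Fp nn by auto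
    have B: "{q \<in> Cs (k # rho). qmap (k # rho) q = qmap (k # rho) p \<and> snd q < snd p}
        = {q \<in> Cs rho. ?T q = ?T p \<and> snd q < snd p}"
      unfolding C' Tp using Tq Fp nn by auto
    have "smap (k # rho) p = smap rho p" using False by simp
    then show ?thesis unfolding A B using Cons.IH[OF _ pC] Cons.prems(1) by simp
  qed
qed

lemma std_qmap: "valid rho \<Longrightarrow> standardize (shp rho) (qmap rho) = smap rho"
proof (rule ext)
  fix p :: "nat \<times> nat"
  assume v: "valid rho"
  obtain r c where p: "p = (r, c)" by fastforce
  show "standardize (shp rho) (qmap rho) p = smap rho p"
  proof (cases "p \<in> Cs rho")
    case True
    then show ?thesis using std_qmap_aux[OF v True] p
      unfolding standardize_def cells_shp[OF v] by simp
  next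
    case False
    then show ?thesis using smap_out[OF False] p
      unfolding standardize_def cells_shp[OF v] by simp
  qed
qed

lemma smap_props: "p \<in> Cs rho \<Longrightarrow> 1 \<le> smap rho p \<and> smap rho p \<le> length rho \<and> fst p = rev rho ! (smap rho p - 1)"
proof (induction rho)
  case Nil then show ?case by simp
next
  case (Cons k rho)
  show ?case
  proof (cases "p = (k, count_list rho k)")
    case True then show ?thesis by (simp add: nth_append)
  next
    case False
    then have pC: "p \<in> Cs rho" using Cons.prems by (simp add: Cs_Cons)
    with Cons.IH have IH: "1 \<le> smap rho p" "smap rho p \<le> length rho" "fst p = rev rho ! (smap rho p - 1)"
      by auto
    have "smap rho p - 1 < length rho" using IH by simp
    then show ?thesis using False IH by (simp add: nth_append)
  qed
qed

lemma smap_onto: "1 \<le> i \<Longrightarrow> i \<le> length rho \<Longrightarrow> \<exists>p\<in>Cs rho. smap rho p = i"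
proof (induction rho)
  case Nil then show ?case by simp
next
  case (Cons k rho)
  show ?case
  proof (cases "i = Suc (length rho)")
    case True
    then show ?thesis by (intro bexI[of _ "(k, count_list rho k)"]) (auto simp: Cs_Cons)
  next
    case False
    then have "i \<le> length rho" using Cons.prems by simp
    with Cons.IH Cons.prems obtain p where p: "p \<in> Cs rho" "smap rho p = i" by auto
    have "p \<noteq> (k, count_list rho k)" using p hcell_notin by blast
    then show ?thesis using p by (intro bexI[of _ p]) (auto simp: Cs_Cons)
  qed
qed

lemma syt_Des_smap: "valid rho \<Longrightarrow> syt_Des (shp rho) (smap rho) = Dset (\<lambda>a b. a < b) (rev rho)"
proof (rule set_eqI)
  fix i assume v: "valid rho"
  have ch: "card (cells (shp rho)) = length rho" using cells_shp[OF v] card_Cs by simp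
  show "i \<in> syt_Des (shp rho) (smap rho) \<longleftrightarrow> i \<in> Dset (\<lambda>a b. a < b) (rev rho)"
  proof
    assume "i \<in> syt_Des (shp rho) (smap rho)"
    then obtain p1 p2 where i: "1 \<le> i" "i < length rho" and p: "p1 \<in> Cs rho" "p2 \<in> Cs rho"
      "smap rho p1 = i" "smap rho p2 = Suc i" "fst p1 < fst p2"
      unfolding syt_Des_def cells_shp[OF v] card_Cs by blast
    have "fst p1 = rev rho ! (i - 1)" "fst p2 = rev rho ! i"
      using smap_props[OF p(1)] smap_props[OF p(2)] p by auto
    then show "i \<in> Dset (\<lambda>a b. a < b) (rev rho)" using i p unfolding Dset_def by auto
  next
    assume "i \<in> Dset (\<lambda>a b. a < b) (rev rho)"
    then have i: "1 \<le> i" "i < length rho" "rev rho ! (i - 1) < rev rho ! i" unfolding Dset_def by auto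
    obtain p1 where p1: "p1 \<in> Cs rho" "smap rho p1 = i" using smap_onto[of i rho] i by auto
    obtain p2 where p2: "p2 \<in> Cs rho" "smap rho p2 = Suc i" using smap_onto[of "Suc i" rho] i by auto
    have "fst p1 = rev rho ! (i - 1)" "fst p2 = rev rho ! i"
      using smap_props[OF p1(1)] smap_props[OF p2(1)] p1 p2 by auto
    then have lt: "fst p1 < fst p2" using i by simp
    show "i \<in> syt_Des (shp rho) (smap rho)"
      unfolding syt_Des_def cells_shp[OF v] card_Cs using i p1 p2 lt by blast
  qed
qed

lemma qmap_inj: "valid r1 \<Longrightarrow> valid r2 \<Longrightarrow> shp r1 = shp r2 \<Longrightarrow> qmap r1 = qmap r2 \<Longrightarrow> r1 = r2"
proof -
  assume v1: "valid r1" and v2: "valid r2" and s: "shp r1 = shp r2" and q: "qmap r1 = qmap r2"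
  have sm: "smap r1 = smap r2" using std_qmap[OF v1] std_qmap[OF v2] s q by metis
  have C: "Cs r1 = Cs r2" using cells_shp[OF v1] cells_shp[OF v2] s by simp
  have l: "length r1 = length r2" using valid_shape[OF v1] valid_shape[OF v2] s by metis
  have "rev r1 = rev r2"
  proof (rule nth_equalityI)
    show "length (rev r1) = length (rev r2)" using l by simp
    fix i assume i: "i < length (rev r1)"
    obtain p where p: "p \<in> Cs r1" "smap r1 p = Suc i" using smap_onto[of "Suc i" r1] i by auto
    have "fst p = rev r1 ! i" using smap_props[OF p(1)] p by simp
    moreover have "fst p = rev r2 ! i" using smap_props[of p r2] p C sm by simp
    ultimately show "rev r1 ! i = rev r2 ! i" by simp
  qed
  then show "r1 = r2" by simp
qed

definition ispart :: "nat list \<Rightarrow> bool" where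
  "ispart nu \<longleftrightarrow> sorted_wrt (\<ge>) nu \<and> 0 \<notin> set nu"

lemma cells_mem: "(r, c) \<in> cells nu \<longleftrightarrow> r < length nu \<and> c < nu ! r"
  by (simp add: cells_def)

lemma part_le: "ispart nu \<Longrightarrow> r1 \<le> r2 \<Longrightarrow> r2 < length nu \<Longrightarrow> nu ! r2 \<le> nu ! r1"
  unfolding ispart_def by (cases "r1 = r2") (auto simp: sorted_wrt_iff_nth_less)

lemma cells_down: "ispart nu \<Longrightarrow> (r2, c) \<in> cells nu \<Longrightarrow> r1 \<le> r2 \<Longrightarrow> (r1, c) \<in> cells nu"
  using part_le[of nu r1 r2] by (auto simp: cells_mem)

lemma cells_left: "(r, c2) \<in> cells nu \<Longrightarrow> c1 \<le> c2 \<Longrightarrow> (r, c1) \<in> cells nu"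
  by (auto simp: cells_mem)

lemma S1: "ssytC (cells nu) T \<Longrightarrow> (r, c2) \<in> cells nu \<Longrightarrow> c1 \<le> c2 \<Longrightarrow> T (r, c1) \<le> T (r, c2)"
proof (induction c2)
  case 0 then show ?case by simp
next
  case (Suc c2)
  show ?case
  proof (cases "c1 = Suc c2")
    case True then show ?thesis by simp
  next
    case False
    then have c1: "c1 \<le> c2" using Suc.prems by simp
    have m: "(r, c2) \<in> cells nu" using cells_left[OF Suc.prems(2), of c2] by simp
    have "T (r, c1) \<le> T (r, c2)" using Suc.IH[OF Suc.prems(1) m c1] .
    also have "T (r, c2) \<le> T (r, Suc c2)" using Suc.prems(1) m Suc.prems(2) unfolding ssytC_def by blast
    finally show ?thesis .
  qed
qed

lemma S2: "ispart nu \<Longrightarrow> ssytC (cells nu) T \<Longrightarrow> (r2, c) \<in> cells nu \<Longrightarrow> r1 < r2 \<Longrightarrow> T (r1, c) < T (r2, c)"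
proof (induction r2)
  case 0 then show ?case by simp
next
  case (Suc r2)
  have m: "(r2, c) \<in> cells nu" using cells_down[OF Suc.prems(1) Suc.prems(3), of r2] by simp
  have st: "T (r2, c) < T (Suc r2, c)" using Suc.prems(2) m Suc.prems(3) unfolding ssytC_def by blast
  show ?case
  proof (cases "r1 = r2")
    case True then show ?thesis using st by simp
  next
    case False
    then have "r1 < r2" using Suc.prems by simp
    then have "T (r1, c) < T (r2, c)" using Suc.IH[OF Suc.prems(1,2) m] by simp
    with st show ?thesis by simp
  qed
qed

lemma S3: "ispart nu \<Longrightarrow> ssytC (cells nu) T \<Longrightarrow> p \<in> cells nu \<Longrightarrow> q \<in> cells nu \<Longrightarrow>
  T p = T q \<Longrightarrow> snd p < snd q \<Longrightarrow> fst q \<le> fst p"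
proof (rule ccontr)
  assume pa: "ispart nu" and s: "ssytC (cells nu) T" and p: "p \<in> cells nu" and q: "q \<in> cells nu"
    and e: "T p = T q" and l: "snd p < snd q" and n: "\<not> fst q \<le> fst p"
  obtain a b where pp: "p = (a, b)" by fastforce
  obtain c d where qq: "q = (c, d)" by fastforce
  have m: "(a, d) \<in> cells nu" using cells_down[OF pa, of c d a] q n pp qq by simp
  have "T (a, b) \<le> T (a, d)" using S1[OF s m, of b] l pp qq by simp
  also have "T (a, d) < T (c, d)" using S2[OF pa s, of c d a] q n pp qq by simp
  finally show False using e pp qq by simp
qed

lemma S4: "ispart nu \<Longrightarrow> ssytC (cells nu) T \<Longrightarrow> p \<in> cells nu \<Longrightarrow> q \<in> cells nu \<Longrightarrow>
  T p = T q \<Longrightarrow> snd p = snd q \<Longrightarrow> p = q"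
proof (rule ccontr)
  assume pa: "ispart nu" and s: "ssytC (cells nu) T" and p: "p \<in> cells nu" and q: "q \<in> cells nu"
    and e: "T p = T q" and l: "snd p = snd q" and n: "p \<noteq> q"
  obtain a b where pp: "p = (a, b)" by fastforce
  obtain c d where qq: "q = (c, d)" by fastforce
  have "a \<noteq> c" using n l pp qq by auto
  then consider "a < c" | "c < a" by linarith
  then show False
  proof cases
    case 1
    then have "T (a, d) < T (c, d)" using S2[OF pa s, of c d a] q qq by simp
    then show False using e l pp qq by simp
  next
    case 2
    then have "T (c, b) < T (a, b)" using S2[OF pa s, of a b c] p pp by simp
    then show False using e l pp qq by simp
  qed
qed


lemma finite_cells: "finite (cells nu)"
proof -
  have "cells nu \<subseteq> {..<length nu} \<times> {..<Max (insert 0 (set nu))}"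
  proof
    fix p assume "p \<in> cells nu"
    then obtain r c where p: "p = (r, c)" "r < length nu" "c < nu ! r" by (auto simp: cells_def)
    then have "nu ! r \<le> Max (insert 0 (set nu))" by (intro Max_ge) auto
    then have "c < Max (insert 0 (set nu))" using p(3) by (rule order.strict_trans2[rotated])
    with p show "p \<in> {..<length nu} \<times> {..<Max (insert 0 (set nu))}" by auto
  qed
  then show ?thesis by (rule finite_subset) auto
qed

lemma part_remove:
  assumes pa: "ispart nu" and k: "k < length nu" and cm: "Suc cm = nu ! k"
    and top: "\<not> (Suc k < length nu \<and> cm < nu ! Suc k)"
  defines "nu' \<equiv> (if nu ! k = 1 then butlast nu else nu[k := nu ! k - 1])"
  shows "ispart nu'" "addcell nu' k = nu" "addable nu' k" "sum_list nu = Suc (sum_list nu')"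
    "cells nu' = cells nu - {(k, cm)}" "(if k < length nu' then nu' ! k else 0) = cm"
proof -
  have s: "sorted_wrt (\<ge>) nu" and z: "0 \<notin> set nu" using pa by (auto simp: ispart_def)
  have le: "\<And>i j. i \<le> j \<Longrightarrow> j < length nu \<Longrightarrow> nu ! j \<le> nu ! i" using part_le[OF pa] by blast
  have pos: "\<And>i. i < length nu \<Longrightarrow> 0 < nu ! i" using z by (metis gr0I nth_mem)
  have all: "ispart nu' \<and> addcell nu' k = nu \<and> addable nu' k \<and> sum_list nu = Suc (sum_list nu') \<and>
    cells nu' = cells nu - {(k, cm)} \<and> (if k < length nu' then nu' ! k else 0) = cm"
  proof (cases "nu ! k = 1")
    case True
    then have cm0: "cm = 0" using cm by simp
    have kl: "Suc k = length nu"
    proof (rule ccontr)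
      assume "Suc k \<noteq> length nu"
      then have "Suc k < length nu" using k by simp
      then have "0 < nu ! Suc k" using pos by simp
      with top cm0 \<open>Suc k < length nu\<close> show False by simp
    qed
    have nu': "nu' = butlast nu" using True by (simp add: nu'_def)
    have nne: "nu \<noteq> []" using k by auto
    have "length nu - 1 = k" using kl by simp
    then have lastk: "last nu = nu ! k" using nne by (simp add: last_conv_nth)
    have app: "butlast nu @ [last nu] = nu" using nne by simp
    have lb: "length (butlast nu) = k" using kl by simp
    show ?thesis
    proof (intro conjI)
      show "ispart nu'" unfolding nu' ispart_def
        using s z by (metis app in_set_butlastD sorted_wrt_append)
      show "addcell nu' k = nu" unfolding nu' addcell_def using lb app lastk True by simp
      show "addable nu' k" unfolding addable_def nu'
      proof (intro conjI)
        show "k \<le> length (butlast nu)" using lb by simp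
        show "k = 0 \<or> (if k < length (butlast nu) then butlast nu ! k else 0) < butlast nu ! (k - 1)"
        proof (cases k)
          case (Suc k')
          have "butlast nu ! k' = nu ! k'" using lb Suc by (simp add: nth_butlast)
          moreover have "0 < nu ! k'" using pos Suc k by simp
          ultimately show ?thesis using lb Suc by simp
        qed simp
      qed
      have "sum_list nu = sum_list (butlast nu) + last nu" using app by (metis sum_list_append sum_list_simps add_0_right sum_list.Cons sum_list.Nil)
      then show "sum_list nu = Suc (sum_list nu')" using lastk True nu' by simp
      show "cells nu' = cells nu - {(k, cm)}"
      proof (rule set_eqI)
        fix p :: "nat \<times> nat"
        obtain r c where p: "p = (r, c)" by fastforce
        show "p \<in> cells nu' \<longleftrightarrow> p \<in> cells nu - {(k, cm)}"
        proof
          assume "p \<in> cells nu'"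
          then have "r < k" "c < nu ! r" using p nu' lb by (auto simp: cells_mem nth_butlast)
          then show "p \<in> cells nu - {(k, cm)}" using p kl by (auto simp: cells_mem)
        next
          assume a: "p \<in> cells nu - {(k, cm)}"
          then have r: "r < length nu" "c < nu ! r" "(r, c) \<noteq> (k, cm)" using p by (auto simp: cells_mem)
          have "r \<noteq> k"
          proof
            assume "r = k" then have "c = 0" using r True by simp
            with r \<open>r = k\<close> cm0 show False by simp
          qed
          then have "r < k" using r kl by simp
          then show "p \<in> cells nu'" using p nu' lb r by (auto simp: cells_mem nth_butlast)
        qed
      qed
      show "(if k < length nu' then nu' ! k else 0) = cm" using lb nu' cm0 by simp
    qed
  next
    case False
    then have nu': "nu' = nu[k := nu ! k - 1]" by (simp add: nu'_def)
    have big: "2 \<le> nu ! k" using False pos[OF k] by simp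
    have ln: "length nu' = length nu" using nu' by simp
    show ?thesis
    proof (intro conjI)
      show "ispart nu'" unfolding ispart_def
      proof
        show "sorted_wrt (\<ge>) nu'"
          unfolding sorted_wrt_iff_nth_less
        proof (intro allI impI)
          fix i j assume ij: "i < j" "j < length nu'"
          show "nu' ! j \<le> nu' ! i"
          proof (cases "j = k")
            case True
            then show ?thesis using ij le[of i j] nu' ln by (auto simp: nth_list_update)
          next
            case False
            show ?thesis
            proof (cases "i = k")
              case True
              have "Suc k < length nu" using ij True ln by simp
              then have "nu ! Suc k \<le> cm" using top by simp
              moreover have "nu ! j \<le> nu ! Suc k" using le[of "Suc k" j] ij True ln by simp
              ultimately show ?thesis using True False nu' cm k by simp
            next
              case False
              then show ?thesis using \<open>j \<noteq> k\<close> ij le[of i j] nu' ln by simp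
            qed
          qed
        qed
        show "0 \<notin> set nu'"
        proof
          assume "0 \<in> set nu'"
          then obtain i where i: "i < length nu'" "nu' ! i = 0" by (auto simp: in_set_conv_nth)
          show False
          proof (cases "i = k")
            case True then show False using i big nu' k by simp
          next
            case False then show False using i pos[of i] nu' ln by simp
          qed
        qed
      qed
      show "addcell nu' k = nu" unfolding addcell_def nu' using k big by simp
      show "addable nu' k" unfolding addable_def
      proof (intro conjI)
        show "k \<le> length nu'" using k ln by simp
        show "k = 0 \<or> (if k < length nu' then nu' ! k else 0) < nu' ! (k - 1)"
        proof (cases k)
          case (Suc k')
          have "nu ! k \<le> nu ! k'" using le[of k' k] Suc k by simp
          then show ?thesis using Suc nu' k big by simp
        qed simp
      qed
      have "nu ! k \<le> sum_list nu" using k by (simp add: member_le_sum_list)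
      then show "sum_list nu = Suc (sum_list nu')" using nu' k big by (simp add: sum_list_update)
      show "cells nu' = cells nu - {(k, cm)}"
      proof (rule set_eqI)
        fix p :: "nat \<times> nat"
        obtain r c where p: "p = (r, c)" by fastforce
        show "p \<in> cells nu' \<longleftrightarrow> p \<in> cells nu - {(k, cm)}"
          unfolding p using nu' ln cm by (cases "r = k") (auto simp: cells_mem nth_list_update)
      qed
      show "(if k < length nu' then nu' ! k else 0) = cm" using k ln nu' cm by simp
    qed
  qed
  then show "ispart nu'" "addcell nu' k = nu" "addable nu' k" "sum_list nu = Suc (sum_list nu')"
    "cells nu' = cells nu - {(k, cm)}" "(if k < length nu' then nu' ! k else 0) = cm" by auto
qed


lemma part_nil: "ispart nu \<Longrightarrow> sum_list nu = 0 \<Longrightarrow> nu = []"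
proof (rule ccontr)
  assume p: "ispart nu" and s: "sum_list nu = 0" and n: "nu \<noteq> []"
  then have "hd nu \<in> set nu" by simp
  then have "hd nu \<le> sum_list nu" using member_le_sum_list[of "hd nu" nu] by simp
  moreover have "hd nu \<noteq> 0"
  proof
    assume "hd nu = 0"
    with \<open>hd nu \<in> set nu\<close> have "0 \<in> set nu" by simp
    with p show False by (simp add: ispart_def)
  qed
  ultimately show False using s by simp
qed

lemma qmap_surj: "sum_list nu = n \<Longrightarrow> ispart nu \<Longrightarrow> qyt nu T \<Longrightarrow> \<exists>rho. valid rho \<and> shp rho = nu \<and> qmap rho = T"
proof (induction n arbitrary: nu T)
  case 0
  then have "nu = []" using part_nil by blast
  then have "cells nu = {}" by (simp add: cells_def)
  then have "T = (\<lambda>_. 0)" using 0 by (auto simp: qyt_C ssytC_def)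
  then show ?case using \<open>nu = []\<close> by (intro exI[of _ "[]"]) simp
next
  case (Suc n)
  have pa: "ispart nu" and ss: "ssytC (cells nu) T" and qy: "qytC (cells nu) T"
    using Suc.prems by (auto simp: qyt_C)
  let ?C = "cells nu"
  have nne: "nu \<noteq> []" using Suc.prems by auto
  have "0 < nu ! 0" using pa nne by (metis gr0I ispart_def length_greater_0_conv nth_mem)
  then have c00: "(0, 0) \<in> ?C" using nne by (simp add: cells_mem)
  have fC: "finite ?C" by (rule finite_cells)
  define m where "m = Max (T ` ?C)"
  have mC: "\<forall>p\<in>?C. T p \<le> m" using fC m_def by auto
  have "m \<in> T ` ?C" unfolding m_def using fC c00 by (intro Max_in) auto
  define Sm where "Sm = {p \<in> ?C. T p = m}"
  have fS: "finite Sm" using fC Sm_def by simp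
  have Sne: "Sm \<noteq> {}" using \<open>m \<in> T ` ?C\<close> Sm_def by auto
  define cm where "cm = Max (snd ` Sm)"
  have "cm \<in> snd ` Sm" unfolding cm_def using fS Sne by (intro Max_in) auto
  then obtain k where kS: "(k, cm) \<in> Sm" by force
  have cmax: "\<forall>p\<in>Sm. snd p \<le> cm" using fS cm_def by auto
  have kC: "(k, cm) \<in> ?C" and Tk: "T (k, cm) = m" using kS Sm_def by auto
  have kl: "k < length nu" and cmk: "cm < nu ! k" using kC by (auto simp: cells_mem)
  have cm_last: "Suc cm = nu ! k"
  proof (rule ccontr)
    assume "Suc cm \<noteq> nu ! k"
    then have "Suc cm < nu ! k" using cmk by simp
    then have kC2: "(k, Suc cm) \<in> ?C" using kl by (simp add: cells_mem)
    then have "T (k, cm) \<le> T (k, Suc cm)" using ss kC unfolding ssytC_def by blast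
    then have "T (k, Suc cm) = m" using mC kC2 Tk by (metis le_antisym)
    then have "(k, Suc cm) \<in> Sm" using kC2 Sm_def by simp
    then show False using cmax by fastforce
  qed
  have top: "\<not> (Suc k < length nu \<and> cm < nu ! Suc k)"
  proof
    assume a: "Suc k < length nu \<and> cm < nu ! Suc k"
    then have kC2: "(Suc k, cm) \<in> ?C" by (simp add: cells_mem)
    then have "T (k, cm) < T (Suc k, cm)" using ss kC unfolding ssytC_def by blast
    with mC kC2 Tk show False by fastforce
  qed
  define nu' where "nu' = (if nu ! k = 1 then butlast nu else nu[k := nu ! k - 1])"
  note PR = part_remove[OF pa kl cm_last top, folded nu'_def]
  define T' where "T' = T((k, cm) := 0)"
  have C': "cells nu' = ?C - {(k, cm)}" using PR(5) .
  have TT': "\<And>p. p \<in> cells nu' \<Longrightarrow> T' p = T p" using C' T'_def by auto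
  have ss': "ssytC (cells nu') T'"
    unfolding ssytC_def
  proof (intro conjI allI impI ballI)
    fix p assume "p \<notin> cells nu'"
    then show "T' p = 0" using C' ss T'_def unfolding ssytC_def by (cases p) auto
  next
    fix p assume "p \<in> cells nu'"
    then show "1 \<le> T' p" using C' ss TT' unfolding ssytC_def by auto
  next
    fix r c assume "(r, c) \<in> cells nu' \<and> (r, Suc c) \<in> cells nu'"
    then show "T' (r, c) \<le> T' (r, Suc c)" using C' ss TT' unfolding ssytC_def by auto
  next
    fix r c assume "(r, c) \<in> cells nu' \<and> (Suc r, c) \<in> cells nu'"
    then show "T' (r, c) < T' (Suc r, c)" using C' ss TT' unfolding ssytC_def by auto
  qed
  have qy': "qytC (cells nu') T'"
    unfolding qytC_def
  proof (intro ballI impI)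
    fix p assume p: "p \<in> cells nu'" and v2: "2 \<le> T' p"
    have pC: "p \<in> ?C" "p \<noteq> (k, cm)" using p C' by auto
    have Tp: "T' p = T p" using TT' p .
    from qy pC v2 Tp obtain p1 p2 where w: "p1 \<in> ?C" "p2 \<in> ?C" "T p1 = T p" "T p2 = T p - 1" "fst p2 < fst p1"
      unfolding qytC_def by force
    have p2n: "p2 \<noteq> (k, cm)"
    proof
      assume "p2 = (k, cm)"
      then have "T p = m + 1" using w Tk v2 Tp by simp
      with mC pC show False by fastforce
    qed
    show "\<exists>p1\<in>cells nu'. \<exists>p2\<in>cells nu'. T' p1 = T' p \<and> T' p2 = T' p - 1 \<and> fst p2 < fst p1"
    proof (cases "p1 = (k, cm)")
      case False
      then show ?thesis using w p2n C' TT' Tp by (intro bexI[of _ p1] bexI[of _ p2]) auto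
    next
      case True
      then have Tpm: "T p = m" using w Tk by simp
      then have "p \<in> Sm" using pC Sm_def by simp
      then have "snd p \<le> cm" using cmax by simp
      moreover have "snd p \<noteq> cm"
      proof
        assume "snd p = cm"
        then have "p = (k, cm)" using S4[OF pa ss pC(1) kC] Tpm Tk by simp
        with pC show False by simp
      qed
      ultimately have "snd p < cm" by simp
      then have "k \<le> fst p" using S3[OF pa ss pC(1) kC] Tpm Tk by simp
      then have "fst p2 < fst p" using w True by simp
      then show ?thesis using w p2n C' TT' Tp p by (intro bexI[of _ p] bexI[of _ p2]) auto
    qed
  qed
  have "qyt nu' T'" using ss' qy' by (simp add: qyt_C)
  moreover have "sum_list nu' = n" using PR(4) Suc.prems(1) by simp
  ultimately obtain rho' where r': "valid rho'" "shp rho' = nu'" "qmap rho' = T'"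
    using Suc.IH PR(1) by blast
  have Cr: "Cs rho' = ?C - {(k, cm)}" using cells_shp[OF r'(1)] r'(2) C' by simp
  have cnt: "count_list rho' k = cm" using shp_count[OF r'(1), of k] r'(2) PR(6)
    by (cases "k < length nu'") simp_all
  have qv: "qval (k # rho') = m"
  proof (cases rho')
    case Nil
    then have "?C - {(k, cm)} = {}" using Cr by simp
    then have Csub: "?C \<subseteq> {(k, cm)}" by blast
    have m1: "1 \<le> m" using ss kC Tk unfolding ssytC_def by auto
    have "\<not> 2 \<le> m"
    proof
      assume "2 \<le> m"
      with qy kC Tk obtain p2 where "p2 \<in> ?C" "T p2 = m - 1" unfolding qytC_def by force
      with Csub Tk m1 show False by auto
    qed
    then show ?thesis using m1 Nil by simp
  next
    case (Cons j rho0)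
    let ?h = "(j, count_list rho0 j)"
    have hC: "?h \<in> Cs rho'" using Cons by (simp add: Cs_Cons)
    have Th': "T' ?h = qval rho'" using r'(3)[symmetric] Cons by simp
    have hC2: "?h \<in> ?C" "?h \<noteq> (k, cm)" using hC Cr by auto
    have Th: "T ?h = qval rho'" using Th' unfolding T'_def fun_upd_other[OF hC2(2)] .
    have bnd: "\<And>p. p \<in> ?C - {(k, cm)} \<Longrightarrow> T p \<le> qval rho'"
    proof -
      fix p assume p: "p \<in> ?C - {(k, cm)}"
      then have "p \<in> Cs rho'" using Cr by simp
      then have "qmap rho' p \<le> qval rho'" using qmap_bounds by blast
      then show "T p \<le> qval rho'" using r'(3) T'_def p by auto
    qed
    show ?thesis
    proof (cases "\<exists>p\<in>?C - {(k, cm)}. T p = m")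
      case True
      then obtain p where p: "p \<in> ?C - {(k, cm)}" "T p = m" by blast
      have "m \<le> qval rho'" using bnd[OF p(1)] p(2) by simp
      moreover have "qval rho' \<le> m" using Th mC hC2 by fastforce
      ultimately have qm: "qval rho' = m" by simp
      then have "T ?h = m" using Th by simp
      then have "?h \<in> Sm" using hC2 Sm_def by simp
      then have "snd ?h \<le> cm" using cmax by blast
      moreover have "snd ?h \<noteq> cm"
      proof
        assume "snd ?h = cm"
        then have "?h = (k, cm)" using S4[OF pa ss hC2(1) kC] \<open>T ?h = m\<close> Tk by simp
        with hC2 show False by simp
      qed
      ultimately have "snd ?h < cm" by simp
      then have "k \<le> j" using S3[OF pa ss hC2(1) kC] \<open>T ?h = m\<close> Tk by simp
      then show ?thesis using qm Cons by simp
    next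
      case False
      have "1 \<le> T ?h" using ss hC2 unfolding ssytC_def by auto
      moreover have "T ?h \<le> m" using mC hC2 by blast
      moreover have "T ?h \<noteq> m" using False hC2 by blast
      ultimately have m2: "2 \<le> m" and hlt: "T ?h < m" by auto
      from qy kC Tk m2 obtain p1 p2 where w: "p1 \<in> ?C" "p2 \<in> ?C" "T p1 = m" "T p2 = m - 1" "fst p2 < fst p1"
        unfolding qytC_def by force
      have "p1 = (k, cm)" using False w by blast
      then have fp2: "fst p2 < k" using w by simp
      have p2n: "p2 \<noteq> (k, cm)" using w Tk m2 by auto
      then have p2C: "p2 \<in> ?C - {(k, cm)}" using w by simp
      have "m - 1 \<le> qval rho'" using bnd[OF p2C] w by simp
      then have qm: "qval rho' = m - 1" using Th hlt by simp
      have "qmap rho' p2 = qval rho'" using r'(3) T'_def p2n w qm by simp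
      then have "snd p2 \<le> count_list rho0 j"
        using I4[OF r'(1) _ _] Cr p2C Cons by simp
      then have "snd p2 \<le> snd ?h" by simp
      then have "j < k"
      proof (cases "snd p2 < snd ?h")
        case True
        have "fst ?h \<le> fst p2" using S3[OF pa ss w(2) hC2(1)] True w qm Th by simp
        then show ?thesis using fp2 by simp
      next
        case False
        then have "snd p2 = snd ?h" using \<open>snd p2 \<le> snd ?h\<close> by simp
        then have "p2 = ?h" using S4[OF pa ss w(2) hC2(1)] w qm Th by simp
        then show ?thesis using fp2 by simp
      qed
      then show ?thesis using qm Cons m2 by simp
    qed
  qed
  have "valid (k # rho')" using r'(1) r'(2) PR(3) by simp
  moreover have "shp (k # rho') = nu" using r'(2) PR(2) by simp
  moreover have "qmap (k # rho') = T"
  proof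
    fix p
    show "qmap (k # rho') p = T p"
      using r'(3) cnt qv T'_def Tk by (cases "p = (k, cm)") auto
  qed
  ultimately show ?case by blast
qed

section \<open>A descent-preserving involution swapping two adjacent letters\<close>

primrec thr :: "nat \<Rightarrow> nat \<Rightarrow> nat \<Rightarrow> nat list \<Rightarrow> nat list" where
  "thr a k m [] = replicate m a @ replicate k (Suc a)"
| "thr a k m (x # w) = (if x = a then (if m = 0 then thr a (Suc k) 0 w
        else replicate (m - 1) a @ replicate k (Suc a) @ [Suc a, a] @ thr a 0 0 w)
     else if x = Suc a then thr a k (Suc m) w
     else replicate m a @ replicate k (Suc a) @ x # thr a 0 0 w)"

definition sw :: "nat \<Rightarrow> nat \<Rightarrow> nat" where
  "sw a x = (if x = a then Suc a else if x = Suc a then a else x)"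

lemma thr_len: "length (thr a k m w) = k + m + length w"
  by (induction w arbitrary: k m) auto

lemma rep_mset_pred: "0 < m \<Longrightarrow> add_mset a (replicate_mset (m - Suc 0) a) = replicate_mset m a"
  by (cases m) auto

lemma thr_mset: "mset (thr a k m w) = mset (map (sw a) w) + replicate_mset m a + replicate_mset k (Suc a)"
  by (induction w arbitrary: k m) (auto simp: sw_def rep_mset_pred)

lemma read_a: "thr a k 0 (replicate i a @ Z) = thr a (k + i) 0 Z"
  by (induction i arbitrary: k) auto

lemma read_b: "thr a k m (replicate j (Suc a) @ Z) = thr a k (m + j) Z"
  by (induction j arbitrary: m) auto

lemma thr_inv: "thr a 0 0 (thr a k m w) = replicate k a @ replicate m (Suc a) @ w"
proof (induction w arbitrary: k m)
  case Nil
  have "thr a 0 0 (replicate m a @ replicate k (Suc a) @ []) = thr a m k []"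
    using read_a[of a 0 m "replicate k (Suc a) @ []"] read_b[of a m 0 k "[]"] by simp
  then show ?case by simp
next
  case (Cons x w)
  show ?case
  proof (cases "x = a")
    case True
    show ?thesis
    proof (cases "m = 0")
      case True
      then show ?thesis using \<open>x = a\<close> Cons.IH[of "Suc k" 0] by (simp add: replicate_app_Cons_same)
    next
      case False
      have "thr a 0 0 (thr a k m (x # w)) =
            thr a 0 0 (replicate (m - 1) a @ replicate k (Suc a) @ Suc a # a # thr a 0 0 w)"
        using True False by simp
      also have "\<dots> = thr a (m - 1) k (Suc a # a # thr a 0 0 w)"
        using read_a[of a 0 "m - 1"] read_b[of a "m - 1" 0 k] by simp
      also have "\<dots> = replicate k a @ replicate (m - 1) (Suc a) @ [Suc a, a] @ thr a 0 0 (thr a 0 0 w)"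
        by simp
      also have "\<dots> = replicate k a @ replicate (m - 1) (Suc a) @ [Suc a, a] @ w"
        using Cons.IH[of 0 0] by simp
      also have "\<dots> = replicate k a @ replicate m (Suc a) @ x # w"
        using False True by (cases m) (auto simp: replicate_app_Cons_same)
      finally show ?thesis .
    qed
  next
    case False
    show ?thesis
    proof (cases "x = Suc a")
      case True
      then show ?thesis using False Cons.IH[of k "Suc m"] by (simp add: replicate_app_Cons_same)
    next
      case False2: False
      have "thr a 0 0 (thr a k m (x # w)) =
            thr a 0 0 (replicate m a @ replicate k (Suc a) @ x # thr a 0 0 w)"
        using False False2 by simp
      also have "\<dots> = thr a m k (x # thr a 0 0 w)"
        using read_a[of a 0 m] read_b[of a m 0 k] by simp
      also have "\<dots> = replicate k a @ replicate m (Suc a) @ x # thr a 0 0 (thr a 0 0 w)"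
        using False False2 by simp
      finally show ?thesis using Cons.IH[of 0 0] by simp
    qed
  qed
qed

definition adjeq :: "nat list \<Rightarrow> nat list \<Rightarrow> bool" where
  "adjeq u v \<longleftrightarrow> length u = length v \<and> (\<forall>i. Suc i < length u \<longrightarrow> (u ! Suc i < u ! i \<longleftrightarrow> v ! Suc i < v ! i))"

lemma adjeq_Dset: "adjeq u v \<Longrightarrow> Dset (\<lambda>x y. y < x) u = Dset (\<lambda>x y. y < x) v"
  unfolding adjeq_def Dset_def
proof (intro set_eqI iffI; clarsimp)
  fix i assume a: "length u = length v" "\<forall>i. Suc i < length v \<longrightarrow> (u ! Suc i < u ! i) = (v ! Suc i < v ! i)"
    "Suc 0 \<le> i" "i < length v"
  then obtain j where j: "i = Suc j" by (cases i) auto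
  then show "u ! i < u ! (i - Suc 0) \<Longrightarrow> v ! i < v ! (i - Suc 0)"
    and "v ! i < v ! (i - Suc 0) \<Longrightarrow> u ! i < u ! (i - Suc 0)" using a by auto
qed

lemma adjeq_refl: "adjeq u u" by (simp add: adjeq_def)

lemma adjeq_sorted: "sorted u \<Longrightarrow> sorted v \<Longrightarrow> length u = length v \<Longrightarrow> adjeq u v"
  unfolding adjeq_def by (auto simp: sorted_iff_nth_mono leD)

lemma adjeq_append: "adjeq X X' \<Longrightarrow> adjeq Y Y' \<Longrightarrow>
  (X \<noteq> [] \<Longrightarrow> Y \<noteq> [] \<Longrightarrow> (hd Y < last X \<longleftrightarrow> hd Y' < last X')) \<Longrightarrow> adjeq (X @ Y) (X' @ Y')"
proof -
  assume x: "adjeq X X'" and y: "adjeq Y Y'" and b: "X \<noteq> [] \<Longrightarrow> Y \<noteq> [] \<Longrightarrow> (hd Y < last X \<longleftrightarrow> hd Y' < last X')"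
  have lx: "length X = length X'" and ly: "length Y = length Y'" using x y by (auto simp: adjeq_def)
  show ?thesis
    unfolding adjeq_def
  proof (intro conjI allI impI)
    show "length (X @ Y) = length (X' @ Y')" using lx ly by simp
    fix i assume i: "Suc i < length (X @ Y)"
    show "(X @ Y) ! Suc i < (X @ Y) ! i \<longleftrightarrow> (X' @ Y') ! Suc i < (X' @ Y') ! i"
    proof (cases "Suc i < length X")
      case True
      then show ?thesis using x lx by (simp add: nth_append adjeq_def)
    next
      case False
      show ?thesis
      proof (cases "Suc i = length X")
        case True
        then have ne: "X \<noteq> []" "Y \<noteq> []" using i by auto
        have ii: "i = length X - 1" "i = length X' - 1" using True lx by auto
        have ne': "X' \<noteq> []" "Y' \<noteq> []" using ne lx ly by auto
        have "X ! i = last X" "X' ! i = last X'" using ii ne ne' by (auto simp: last_conv_nth)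
        moreover have "Y ! 0 = hd Y" "Y' ! 0 = hd Y'" using ne ne' by (auto simp: hd_conv_nth)
        ultimately show ?thesis using True lx b[OF ne] by (simp add: nth_append)
      next
        case False2: False
        then have "length X \<le> i" using False by simp
        moreover then have "Suc (i - length X) < length Y" using i by simp
        ultimately show ?thesis using y lx ly
          by (simp add: nth_append adjeq_def Suc_diff_le)
      qed
    qed
  qed
qed

definition clseq :: "nat \<Rightarrow> nat \<Rightarrow> nat \<Rightarrow> bool" where
  "clseq a x y \<longleftrightarrow> (x \<in> {a, Suc a} \<and> y \<in> {a, Suc a}) \<or> x = y"

lemma cmp1: "clseq a x x' \<Longrightarrow> clseq a y y' \<Longrightarrow> \<not> (x \<in> {a, Suc a} \<and> y \<in> {a, Suc a}) \<Longrightarrow> (y < x \<longleftrightarrow> y' < x')"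
  unfolding clseq_def by auto

lemma cmp_a: "clseq a y y' \<Longrightarrow> (y < a \<longleftrightarrow> y' < a)"
  unfolding clseq_def by auto

lemma set_blocks: "set (replicate i a @ replicate j (Suc a)) \<subseteq> {a, Suc a}"
  by auto

lemma sorted_blocks: "sorted (replicate i a @ replicate j (Suc a))"
  by (auto simp: sorted_append)

lemma thr_des: "adjeq (thr a k m w) (replicate k a @ replicate m (Suc a) @ w) \<and>
  (0 < k + m + length w \<longrightarrow> clseq a (hd (thr a k m w)) (hd (replicate k a @ replicate m (Suc a) @ w)))"
proof (induction w arbitrary: k m)
  case Nil
  have "adjeq (replicate m a @ replicate k (Suc a)) (replicate k a @ replicate m (Suc a))"
    by (rule adjeq_sorted[OF sorted_blocks sorted_blocks]) simp
  moreover have "0 < k + m \<longrightarrow> clseq a (hd (replicate m a @ replicate k (Suc a))) (hd (replicate k a @ replicate m (Suc a)))"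
  proof
    assume "0 < k + m"
    then have "hd (replicate m a @ replicate k (Suc a)) \<in> {a, Suc a}" "hd (replicate k a @ replicate m (Suc a)) \<in> {a, Suc a}"
      using set_blocks[of m a k] set_blocks[of k a m] by (metis Nil_is_append_conv add_is_0 hd_in_set length_0_conv
        length_replicate not_gr_zero subsetD)+
    then show "clseq a (hd (replicate m a @ replicate k (Suc a))) (hd (replicate k a @ replicate m (Suc a)))"
      by (simp add: clseq_def)
  qed
  ultimately show ?case by simp
next
  case (Cons x w)
  have IH0: "adjeq (thr a 0 0 w) w" "0 < length w \<Longrightarrow> clseq a (hd (thr a 0 0 w)) (hd w)"
    using Cons.IH[of 0 0] by auto
  show ?case
  proof (cases "x = a")
    case True
    show ?thesis
    proof (cases "m = 0")
      case True
      then show ?thesis using \<open>x = a\<close> Cons.IH[of "Suc k" 0] by (simp add: replicate_app_Cons_same)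
    next
      case False
      let ?S = "replicate (m - 1) a @ replicate k (Suc a)" and ?S' = "replicate k a @ replicate (m - 1) (Suc a)"
      have O: "thr a k m (x # w) = (?S @ [Suc a, a]) @ thr a 0 0 w" using True False by simp
      have I: "replicate k a @ replicate m (Suc a) @ x # w = (?S' @ [Suc a, a]) @ w"
        using True False by (cases m) (auto simp: replicate_app_Cons_same)
      have lastS: "?S \<noteq> [] \<Longrightarrow> last ?S \<in> {a, Suc a}" "?S' \<noteq> [] \<Longrightarrow> last ?S' \<in> {a, Suc a}"
        using set_blocks by (metis last_in_set subsetD)+
      have A1: "adjeq (?S @ [Suc a, a]) (?S' @ [Suc a, a])"
      proof (rule adjeq_append)
        show "adjeq ?S ?S'" by (rule adjeq_sorted[OF sorted_blocks sorted_blocks]) simp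
        show "adjeq [Suc a, a] [Suc a, a]" by (rule adjeq_refl)
        assume "?S \<noteq> []"
        then show "(hd [Suc a, a] < last ?S) = (hd [Suc a, a] < last ?S')"
          using lastS by (auto simp: length_greater_0_conv[symmetric])
      qed
      have A2: "adjeq ((?S @ [Suc a, a]) @ thr a 0 0 w) ((?S' @ [Suc a, a]) @ w)"
      proof (rule adjeq_append[OF A1 IH0(1)])
        assume "thr a 0 0 w \<noteq> []"
        then have "0 < length w" using thr_len[of a 0 0 w] by (metis add_0 length_greater_0_conv)
        then show "(hd (thr a 0 0 w) < last (?S @ [Suc a, a])) = (hd w < last (?S' @ [Suc a, a]))"
          using cmp_a[OF IH0(2)] by simp
      qed
      have sS: "set (?S @ [Suc a, a]) \<subseteq> {a, Suc a}" "set (?S' @ [Suc a, a]) \<subseteq> {a, Suc a}"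
        using set_blocks[of "m - 1" a k] set_blocks[of k a "m - 1"] by auto
      have ne1: "?S @ [Suc a, a] \<noteq> []" and ne2: "?S' @ [Suc a, a] \<noteq> []" by simp_all
      have h1: "hd (?S @ [Suc a, a]) \<in> {a, Suc a}" using sS(1) hd_in_set[OF ne1] by blast
      have h2: "hd (?S' @ [Suc a, a]) \<in> {a, Suc a}" using sS(2) hd_in_set[OF ne2] by blast
      have hO: "hd ((?S @ [Suc a, a]) @ thr a 0 0 w) \<in> {a, Suc a}"
        using h1 unfolding hd_append2[OF ne1] .
      have hI: "hd ((?S' @ [Suc a, a]) @ w) \<in> {a, Suc a}"
        using h2 unfolding hd_append2[OF ne2] .
      show ?thesis unfolding O I using A2 hO hI by (simp add: clseq_def)
    qed
  next
    case False
    show ?thesis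
    proof (cases "x = Suc a")
      case True
      then show ?thesis using False Cons.IH[of k "Suc m"] by (simp add: replicate_app_Cons_same)
    next
      case False2: False
      let ?S = "replicate m a @ replicate k (Suc a)" and ?S' = "replicate k a @ replicate m (Suc a)"
      have O: "thr a k m (x # w) = ?S @ (x # thr a 0 0 w)" using False False2 by simp
      have I: "replicate k a @ replicate m (Suc a) @ x # w = ?S' @ (x # w)" by simp
      have xn: "x \<notin> {a, Suc a}" using False False2 by simp
      have A1: "adjeq (x # thr a 0 0 w) (x # w)"
      proof -
        have "adjeq ([x] @ thr a 0 0 w) ([x] @ w)"
        proof (rule adjeq_append[OF adjeq_refl IH0(1)])
          assume "thr a 0 0 w \<noteq> []"
          then have "0 < length w" using thr_len[of a 0 0 w] by (metis add_0 length_greater_0_conv)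
          then have "clseq a (hd (thr a 0 0 w)) (hd w)" using IH0(2) by simp
          then show "(hd (thr a 0 0 w) < last [x]) = (hd w < last [x])"
            using cmp1[of a x x "hd (thr a 0 0 w)" "hd w"] xn by (simp add: clseq_def)
        qed
        then show ?thesis by simp
      qed
      have A2: "adjeq (?S @ (x # thr a 0 0 w)) (?S' @ (x # w))"
      proof (rule adjeq_append[OF _ A1])
        show "adjeq ?S ?S'" by (rule adjeq_sorted[OF sorted_blocks sorted_blocks]) simp
        assume ne: "?S \<noteq> []"
        then have ne': "?S' \<noteq> []" by auto
        have "last ?S \<in> {a, Suc a}" "last ?S' \<in> {a, Suc a}"
          using set_blocks ne ne' by (metis last_in_set subsetD)+
        then show "(hd (x # thr a 0 0 w) < last ?S) = (hd (x # w) < last ?S')"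
          using xn by auto
      qed
      have hd: "clseq a (hd (?S @ (x # thr a 0 0 w))) (hd (?S' @ (x # w)))"
      proof (cases "k + m = 0")
        case True then show ?thesis by (simp add: clseq_def)
      next
        case False
        then have "?S \<noteq> []" "?S' \<noteq> []" by auto
        then have "hd ?S \<in> {a, Suc a}" "hd ?S' \<in> {a, Suc a}"
          using set_blocks by (metis hd_in_set subsetD)+
        then show ?thesis unfolding hd_append2[OF \<open>?S \<noteq> []\<close>] hd_append2[OF \<open>?S' \<noteq> []\<close>]
          by (simp add: clseq_def)
      qed
      show ?thesis unfolding O I using A2 hd by simp
    qed
  qed
qed

lemma thr_Des: "Dset (\<lambda>x y. y < x) (thr a 0 0 w) = Dset (\<lambda>x y. y < x) w"
  using adjeq_Dset thr_des[of a 0 0 w] by simp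


section \<open>Symmetry of the descent distribution in the content\<close>

definition Wc :: "nat list \<Rightarrow> nat list set" where
  "Wc c = {w. length w = sum_list c \<and> set w \<subseteq> {1..length c} \<and> (\<forall>i<length c. count_list w (Suc i) = c ! i)}"

lemma words_Wc: "words lam = Wc lam"
  by (simp add: words_def Wc_def)

definition swapadj :: "nat \<Rightarrow> 'a list \<Rightarrow> 'a list" where
  "swapadj j c = c[j := c ! Suc j, Suc j := c ! j]"

lemma sw_sw: "sw a (sw a x) = x" by (simp add: sw_def)

lemma count_map_sw: "count_list (map (sw a) w) y = count_list w (sw a y)"
  by (induction w) (auto simp: sw_def)

lemma word_Des_Dset: "word_Des w = Dset (\<lambda>x y. y < x) w"
  by (simp add: word_Des_def Dset_def)

lemma thr_Wc: "Suc j < length c \<Longrightarrow> w \<in> Wc c \<Longrightarrow> thr (Suc j) 0 0 w \<in> Wc (swapadj j c)"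
proof -
  assume j: "Suc j < length c" and w: "w \<in> Wc c"
  let ?a = "Suc j"
  have ms: "mset (thr ?a 0 0 w) = mset (map (sw ?a) w)" using thr_mset[of ?a 0 0 w] by simp
  have lsw: "length (swapadj j c) = length c" by (simp add: swapadj_def)
  have msc: "mset (swapadj j c) = mset c" unfolding swapadj_def using j by (intro mset_swap) auto
  have "sum_list (swapadj j c) = sum_list c"
    using msc by (metis sum_mset_sum_list)
  then have l: "length (thr ?a 0 0 w) = sum_list (swapadj j c)" using w thr_len[of ?a 0 0 w] by (simp add: Wc_def)
  have "set (thr ?a 0 0 w) = sw ?a ` set w" using ms by (metis list.set_map set_mset_mset)
  moreover have "sw ?a ` set w \<subseteq> {1..length c}" using w j by (auto simp: Wc_def sw_def)
  ultimately have s: "set (thr ?a 0 0 w) \<subseteq> {1..length (swapadj j c)}" using lsw by simp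
  have cnt: "\<forall>i<length (swapadj j c). count_list (thr ?a 0 0 w) (Suc i) = swapadj j c ! i"
  proof (intro allI impI)
    fix i assume i: "i < length (swapadj j c)"
    have "count_list (thr ?a 0 0 w) (Suc i) = count (mset (thr ?a 0 0 w)) (Suc i)" by (simp add: count_mset)
    also have "\<dots> = count_list (map (sw ?a) w) (Suc i)" using ms by (metis count_mset)
    also have "\<dots> = count_list w (sw ?a (Suc i))" by (rule count_map_sw)
    also have "\<dots> = swapadj j c ! i"
    proof -
      have cw: "\<And>i. i < length c \<Longrightarrow> count_list w (Suc i) = c ! i" using w by (simp add: Wc_def)
      consider "i = j" | "i = Suc j" | "i \<noteq> j \<and> i \<noteq> Suc j" by blast
      then show ?thesis
      proof cases
        case 1 then show ?thesis using cw[of "Suc j"] j by (simp add: sw_def swapadj_def)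
      next
        case 2 then show ?thesis using cw[of j] j by (simp add: sw_def swapadj_def)
      next
        case 3 then show ?thesis using cw[of i] i lsw by (simp add: sw_def swapadj_def)
      qed
    qed
    finally show "count_list (thr ?a 0 0 w) (Suc i) = swapadj j c ! i" .
  qed
  show ?thesis using l s cnt lsw unfolding Wc_def by simp
qed

lemma swapadj_swapadj: "Suc j < length c \<Longrightarrow> swapadj j (swapadj j c) = c"
  unfolding swapadj_def by (auto simp: list_update_swap nth_list_update)

lemma length_swapadj: "length (swapadj j c) = length c"
  by (simp add: swapadj_def)

lemma F_swap: "Suc j < length c \<Longrightarrow>
  (\<Sum>w\<in>Wc (swapadj j c). g (word_Des w)) = (\<Sum>w\<in>Wc c. g (word_Des w))"
proof -
  assume j: "Suc j < length c"
  let ?f = "thr (Suc j) 0 0"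
  have inv: "\<And>w. ?f (?f w) = w" using thr_inv[of "Suc j" 0 0] by simp
  have b: "bij_betw ?f (Wc c) (Wc (swapadj j c))"
  proof (rule bij_betw_byWitness[where f' = ?f])
    show "\<forall>a\<in>Wc c. ?f (?f a) = a" using inv by simp
    show "\<forall>a\<in>Wc (swapadj j c). ?f (?f a) = a" using inv by simp
    show "?f ` Wc c \<subseteq> Wc (swapadj j c)" using thr_Wc[OF j] by blast
    have j': "Suc j < length (swapadj j c)" using j by (simp add: length_swapadj)
    show "?f ` Wc (swapadj j c) \<subseteq> Wc c" using thr_Wc[OF j'] swapadj_swapadj[OF j] by fastforce
  qed
  have "(\<Sum>w\<in>Wc c. g (word_Des (?f w))) = (\<Sum>w\<in>Wc (swapadj j c). g (word_Des w))"
    by (rule sum.reindex_bij_betw[OF b])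
  moreover have "\<And>w. word_Des (?f w) = word_Des w" by (simp add: word_Des_Dset thr_Des)
  ultimately show ?thesis by simp
qed

lemma swapadj_mid: "swapadj (length d1) (d1 @ x # y # d2) = d1 @ y # x # d2"
  by (simp add: swapadj_def list_update_append nth_append)

lemma swapadj_Cons: "swapadj (Suc j) (x # l) = x # swapadj j l"
  by (simp add: swapadj_def)

lemma move_front: "(\<forall>c j. Suc j < length c \<longrightarrow> f (swapadj j c) = f c) \<Longrightarrow> f (d1 @ x # d2) = f (x # d1 @ d2)"
proof (induction d1 arbitrary: d2 rule: rev_induct)
  case Nil then show ?case by simp
next
  case (snoc y d1)
  have "f ((d1 @ [y]) @ x # d2) = f (swapadj (length d1) (d1 @ x # y # d2))"
    by (simp add: swapadj_mid)
  also have "\<dots> = f (d1 @ x # y # d2)" using snoc.prems by simp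
  also have "\<dots> = f (x # d1 @ y # d2)" using snoc.IH[OF snoc.prems] .
  finally show ?case by simp
qed

lemma swap_invariant_mset:
  fixes f :: "'a list \<Rightarrow> 'b" and c d :: "'a list"
  shows "(\<forall>c j. Suc j < length c \<longrightarrow> f (swapadj j c) = f c) \<Longrightarrow> mset c = mset d \<Longrightarrow> f c = f d"
proof (induction c arbitrary: d f)
  case Nil then show ?case by simp
next
  case (Cons x c)
  have "x \<in> set d" using Cons.prems(2) by (metis list.set_intros(1) set_mset_mset)
  then obtain d1 d2 where d: "d = d1 @ x # d2" by (meson split_list)
  have "f d = f (x # d1 @ d2)" using move_front[OF Cons.prems(1)] d by simp
  moreover have "mset c = mset (d1 @ d2)" using Cons.prems(2) d by simp
  moreover have "\<forall>c j. Suc j < length c \<longrightarrow> (\<lambda>l. f (x # l)) (swapadj j c) = (\<lambda>l. f (x # l)) c"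
  proof (intro allI impI)
    fix c' :: "'a list" and j :: nat assume "Suc j < length c'"
    then have "Suc (Suc j) < length (x # c')" by simp
    then have "f (swapadj (Suc j) (x # c')) = f (x # c')" using Cons.prems(1) by blast
    then show "(\<lambda>l. f (x # l)) (swapadj j c') = (\<lambda>l. f (x # l)) c'" by (simp add: swapadj_Cons)
  qed
  ultimately show ?case using Cons.IH[of "\<lambda>l. f (x # l)" "d1 @ d2"] by simp
qed

lemma F_perm: "mset c = mset d \<Longrightarrow> (\<Sum>w\<in>Wc c. g (word_Des w)) = (\<Sum>w\<in>Wc d. g (word_Des w))"
  using swap_invariant_mset[where f = "\<lambda>c. \<Sum>w\<in>Wc c. g (word_Des w)"] F_swap by metis

section \<open>List tableaux versus function tableaux\<close>

lemma ssytL_iff: "ssytL P \<longleftrightarrow> (\<forall>r<length P. P ! r \<noteq> [] \<and> sorted (P ! r)) \<and>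
   (\<forall>r. Suc r < length P \<longrightarrow> abv (P ! r) (P ! Suc r))"
proof (induction P)
  case Nil then show ?case by simp
next
  case (Cons r rs)
  have A: "(\<forall>i<length (r # rs). (r # rs) ! i \<noteq> [] \<and> sorted ((r # rs) ! i)) \<longleftrightarrow>
      (r \<noteq> [] \<and> sorted r) \<and> (\<forall>i<length rs. rs ! i \<noteq> [] \<and> sorted (rs ! i))"
    by (simp add: All_less_Suc2)
  have B: "(\<forall>i. Suc i < length (r # rs) \<longrightarrow> abv ((r # rs) ! i) ((r # rs) ! Suc i)) \<longleftrightarrow>
      (case rs of [] \<Rightarrow> True | r2 # _ \<Rightarrow> abv r r2) \<and> (\<forall>i. Suc i < length rs \<longrightarrow> abv (rs ! i) (rs ! Suc i))"
  proof (cases rs)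
    case Nil then show ?thesis by simp
  next
    case (Cons r2 rs2)
    have "(\<forall>i. Suc i < length (r # rs) \<longrightarrow> abv ((r # rs) ! i) ((r # rs) ! Suc i)) \<longleftrightarrow>
       (\<forall>i<length rs. abv ((r # rs) ! i) (rs ! i))" by auto
    also have "\<dots> \<longleftrightarrow> abv r r2 \<and> (\<forall>i. Suc i < length rs \<longrightarrow> abv (rs ! i) (rs ! Suc i))"
      using Cons by (auto simp: All_less_Suc2)
    finally show ?thesis using Cons by simp
  qed
  show ?case unfolding A B ssytL.simps Cons.IH by blast
qed

definition tof :: "nat list list \<Rightarrow> nat \<times> nat \<Rightarrow> nat" where
  "tof P = (\<lambda>(r, c). if r < length P \<and> c < length (P ! r) then P ! r ! c else 0)"

definition tol :: "nat list \<Rightarrow> (nat \<times> nat \<Rightarrow> nat) \<Rightarrow> nat list list" where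
  "tol nu T = map (\<lambda>r. map (\<lambda>c. T (r, c)) [0..<nu ! r]) [0..<length nu]"

definition SL :: "nat \<Rightarrow> nat list \<Rightarrow> nat list list set" where
  "SL N nu = {P. ssytL P \<and> map length P = nu \<and> set (concat P) \<subseteq> {1..N}}"

definition ST :: "nat \<Rightarrow> nat list \<Rightarrow> (nat \<times> nat \<Rightarrow> nat) set" where
  "ST N nu = {T. ssyt nu T \<and> (\<forall>p\<in>cells nu. T p \<le> N)}"

lemma cells_map_length: "(r, c) \<in> cells (map length P) \<longleftrightarrow> r < length P \<and> c < length (P ! r)"
  by (auto simp: cells_mem)

lemma entry_in_concat: "r < length P \<Longrightarrow> c < length (P ! r) \<Longrightarrow> P ! r ! c \<in> set (concat P)"
  using nth_mem[of r P] nth_mem[of c "P ! r"] by (auto intro!: bexI[of _ "P ! r"])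

lemma tof_ST: "P \<in> SL N nu \<Longrightarrow> tof P \<in> ST N nu"
proof -
  assume P: "P \<in> SL N nu"
  then have s: "ssytL P" and nu: "nu = map length P" and e: "set (concat P) \<subseteq> {1..N}" by (auto simp: SL_def)
  from s have rs: "\<And>r. r < length P \<Longrightarrow> sorted (P ! r)"
    and ab: "\<And>r. Suc r < length P \<Longrightarrow> abv (P ! r) (P ! Suc r)" by (auto simp: ssytL_iff)
  have ent: "\<And>r c. r < length P \<Longrightarrow> c < length (P ! r) \<Longrightarrow> 1 \<le> P ! r ! c \<and> P ! r ! c \<le> N"
    using e entry_in_concat by fastforce
  show ?thesis
    unfolding ST_def ssyt_def nu
  proof (intro CollectI conjI allI impI ballI)
    fix p assume "p \<notin> cells (map length P)"
    then show "tof P p = 0" by (cases p) (auto simp: tof_def cells_map_length)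
  next
    fix p assume "p \<in> cells (map length P)"
    then show "1 \<le> tof P p" using ent by (cases p) (auto simp: tof_def cells_map_length)
  next
    fix r c assume "(r, c) \<in> cells (map length P) \<and> (r, Suc c) \<in> cells (map length P)"
    then show "tof P (r, c) \<le> tof P (r, Suc c)"
      using rs by (auto simp: tof_def cells_map_length sorted_iff_nth_mono)
  next
    fix r c assume a: "(r, c) \<in> cells (map length P) \<and> (Suc r, c) \<in> cells (map length P)"
    then have "abv (P ! r) (P ! Suc r)" using ab by (simp add: cells_map_length)
    then show "tof P (r, c) < tof P (Suc r, c)"
      using a by (auto simp: tof_def cells_map_length abv_def)
  next
    fix p assume "p \<in> cells (map length P)"
    then show "tof P p \<le> N" using ent by (cases p) (auto simp: tof_def cells_map_length)
  qed
qed

lemma tol_SL: "ispart nu \<Longrightarrow> T \<in> ST N nu \<Longrightarrow> tol nu T \<in> SL N nu"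
proof -
  assume pa: "ispart nu" and T: "T \<in> ST N nu"
  have ss: "ssytC (cells nu) T" using T unfolding ST_def ssyt_C by blast
  have le: "\<forall>p\<in>cells nu. T p \<le> N" using T unfolding ST_def by blast
  have z: "0 \<notin> set nu" using pa unfolding ispart_def by blast
  have pos: "\<And>r. r < length nu \<Longrightarrow> 0 < nu ! r"
  proof -
    fix r assume "r < length nu"
    then have "nu ! r \<in> set nu" by simp
    show "0 < nu ! r"
    proof (rule ccontr)
      assume "\<not> 0 < nu ! r"
      then have "nu ! r = 0" by simp
      with \<open>nu ! r \<in> set nu\<close> z show False by simp
    qed
  qed
  have "map length (tol nu T) = map (\<lambda>r. length (map (\<lambda>c. T (r, c)) [0..<nu ! r])) [0..<length nu]"
    unfolding tol_def by (simp only: map_map comp_def)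
  also have "\<dots> = map (\<lambda>r. nu ! r) [0..<length nu]" by simp
  also have "\<dots> = nu" by (rule map_nth)
  finally have ml: "map length (tol nu T) = nu" .
  have lt: "length (tol nu T) = length nu" by (simp add: tol_def)
  have nth: "\<And>r. r < length nu \<Longrightarrow> tol nu T ! r = map (\<lambda>c. T (r, c)) [0..<nu ! r]" by (simp add: tol_def)
  have "ssytL (tol nu T)"
    unfolding ssytL_iff lt
  proof (intro conjI allI impI)
    fix r assume r: "r < length nu"
    show "tol nu T ! r \<noteq> []" using nth[OF r] pos[OF r] by simp
    show "sorted (tol nu T ! r)"
      unfolding nth[OF r] sorted_iff_nth_mono
    proof (intro allI impI)
      fix i j assume ij: "i \<le> j" "j < length (map (\<lambda>c. T (r, c)) [0..<nu ! r])"
      then have "(r, j) \<in> cells nu" using r by (simp add: cells_mem)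
      then show "map (\<lambda>c. T (r, c)) [0..<nu ! r] ! i \<le> map (\<lambda>c. T (r, c)) [0..<nu ! r] ! j"
        using S1[OF ss _ ij(1)] ij by simp
    qed
  next
    fix r assume r: "Suc r < length nu"
    show "abv (tol nu T ! r) (tol nu T ! Suc r)"
    proof -
      have r': "r < length nu" using r by simp
      have e1: "tol nu T ! r = map (\<lambda>c. T (r, c)) [0..<nu ! r]" using nth[OF r'] .
      have e2: "tol nu T ! Suc r = map (\<lambda>c. T (Suc r, c)) [0..<nu ! Suc r]" using nth[OF r] .
      show ?thesis unfolding abv_def e1 e2
    proof (intro conjI allI impI)
      show "length (map (\<lambda>c. T (Suc r, c)) [0..<nu ! Suc r]) \<le> length (map (\<lambda>c. T (r, c)) [0..<nu ! r])"
        using part_le[OF pa, of r "Suc r"] r by simp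
      fix i assume i: "i < length (map (\<lambda>c. T (Suc r, c)) [0..<nu ! Suc r])"
      then have c1: "(Suc r, i) \<in> cells nu" using r by (simp add: cells_mem)
      have c2: "(r, i) \<in> cells nu" using cells_down[OF pa c1, of r] by simp
      have "T (r, i) < T (Suc r, i)" using ss c1 c2 unfolding ssytC_def by blast
      moreover have "i < nu ! r" using part_le[OF pa, of r "Suc r"] r i by simp
      ultimately show "map (\<lambda>c. T (r, c)) [0..<nu ! r] ! i < map (\<lambda>c. T (Suc r, c)) [0..<nu ! Suc r] ! i"
        using i by simp
    qed
    qed
  qed
  moreover have "set (concat (tol nu T)) \<subseteq> {1..N}"
  proof
    fix y assume "y \<in> set (concat (tol nu T))"
    then obtain l where l: "l \<in> set (tol nu T)" "y \<in> set l" unfolding set_concat by blast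
    then obtain r where r: "r < length (tol nu T)" "l = tol nu T ! r" by (metis in_set_conv_nth)
    then have rl: "r < length nu" using lt by simp
    then have "l = map (\<lambda>c. T (r, c)) [0..<nu ! r]" using nth r by simp
    then obtain c where "c < nu ! r" "y = T (r, c)" using l(2) by auto
    then have "r < length nu" "c < nu ! r" "y = T (r, c)" using rl by auto
    then have "(r, c) \<in> cells nu" "y = T (r, c)" by (auto simp: cells_mem)
    then show "y \<in> {1..N}" using ss le unfolding ssytC_def by auto
  qed
  ultimately show ?thesis using ml by (simp add: SL_def)
qed

lemma tol_tof: "map length P = nu \<Longrightarrow> tol nu (tof P) = P"
proof -
  assume nu: "map length P = nu"
  show ?thesis
  proof (rule nth_equalityI)
    show "length (tol nu (tof P)) = length P" using nu by (auto simp: tol_def)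
    fix r assume "r < length (tol nu (tof P))"
    then have r: "r < length P" using nu by (auto simp: tol_def)
    then have nr: "nu ! r = length (P ! r)" using nu by auto
    show "tol nu (tof P) ! r = P ! r"
      using r nu nr by (auto simp: tol_def tof_def intro: nth_equalityI)
  qed
qed

lemma tof_tol: "T \<in> ST N nu \<Longrightarrow> tof (tol nu T) = T"
proof (rule ext)
  fix p :: "nat \<times> nat" assume T: "T \<in> ST N nu"
  then have off: "\<And>p. p \<notin> cells nu \<Longrightarrow> T p = 0" by (auto simp: ST_def ssyt_def)
  obtain r c where p: "p = (r, c)" by fastforce
  show "tof (tol nu T) p = T p"
  proof (cases "r < length nu \<and> c < nu ! r")
    case True then show ?thesis using p by (simp add: tof_def tol_def)
  next
    case False
    then have "p \<notin> cells nu" using p by (simp add: cells_mem)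
    then show ?thesis using off False p by (auto simp: tof_def tol_def)
  qed
qed

lemma bij_tof: "ispart nu \<Longrightarrow> bij_betw tof (SL N nu) (ST N nu)"
proof (rule bij_betw_byWitness[where f' = "tol nu"])
  assume pa: "ispart nu"
  show "\<forall>a\<in>SL N nu. tol nu (tof a) = a" using tol_tof by (auto simp: SL_def)
  show "\<forall>a'\<in>ST N nu. tof (tol nu a') = a'" using tof_tol by blast
  show "tof ` SL N nu \<subseteq> ST N nu" using tof_ST by blast
  show "tol nu ` ST N nu \<subseteq> SL N nu" using tol_SL[OF pa] by blast
qed

definition phi :: "'a::comm_ring_1 \<Rightarrow> 'a \<Rightarrow> nat set \<Rightarrow> 'a" where
  "phi q t D = q ^ (\<Sum>D) * t ^ card D"

lemma cells_Cons_map: "cells (map length (r # P)) =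
   (\<lambda>c. (0, c)) ` {..<length r} \<union> (\<lambda>(i, c). (Suc i, c)) ` cells (map length P)"
proof (rule set_eqI)
  fix p :: "nat \<times> nat"
  obtain a c where p: "p = (a, c)" by fastforce
  show "p \<in> cells (map length (r # P)) \<longleftrightarrow> p \<in> (\<lambda>c. (0, c)) ` {..<length r} \<union> (\<lambda>(i, c). (Suc i, c)) ` cells (map length P)"
  proof (cases a)
    case 0 then show ?thesis using p by (auto simp: cells_mem)
  next
    case (Suc i)
    have "(Suc i, c) \<in> (\<lambda>(i, c). (Suc i, c)) ` cells (map length P) \<longleftrightarrow> (i, c) \<in> cells (map length P)"
      by force
    then show ?thesis using p Suc by (auto simp: cells_mem)
  qed
qed

lemma finite_cells_map: "finite (cells (map length P))"
  by (rule finite_cells)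

lemma wt_cells: "(\<Prod>p\<in>cells (map length P). x (tof P p)) = prod_list (map x (concat P))"
proof (induction P)
  case Nil then show ?case by (simp add: cells_def)
next
  case (Cons r P)
  let ?A = "(\<lambda>c. (0::nat, c)) ` {..<length r}" and ?B = "(\<lambda>(i, c). (Suc i, c)) ` cells (map length P)"
  have d: "?A \<inter> ?B = {}" by auto
  have fA: "finite ?A" by simp
  have fB: "finite ?B" using finite_cells_map[of P] by simp
  have "(\<Prod>p\<in>cells (map length (r # P)). x (tof (r # P) p)) =
        (\<Prod>p\<in>?A. x (tof (r # P) p)) * (\<Prod>p\<in>?B. x (tof (r # P) p))"
    unfolding cells_Cons_map by (rule prod.union_disjoint[OF fA fB d])
  also have "(\<Prod>p\<in>?A. x (tof (r # P) p)) = (\<Prod>c\<in>{..<length r}. x (tof (r # P) (0, c)))"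
    by (subst prod.reindex) (auto simp: inj_on_def)
  also have "\<dots> = (\<Prod>c\<in>{..<length r}. x (r ! c))"
    by (rule prod.cong) (auto simp: tof_def)
  also have "\<dots> = prod_list (map x r)"
    by (simp add: prod.list_conv_set_nth atLeast0LessThan)
  also have "(\<Prod>p\<in>?B. x (tof (r # P) p)) = (\<Prod>p\<in>cells (map length P). x (tof (r # P) (Suc (fst p), snd p)))"
    by (subst prod.reindex) (auto simp: inj_on_def case_prod_beta)
  also have "\<dots> = (\<Prod>p\<in>cells (map length P). x (tof P p))"
    by (rule prod.cong) (auto simp: tof_def)
  finally show ?case using Cons.IH by simp
qed

lemma prod_list_count:
  fixes w :: "nat list" and N :: nat and x :: "nat \<Rightarrow> 'a::comm_monoid_mult"
  shows "set w \<subseteq> {1..N} \<Longrightarrow> prod_list (map x w) = (\<Prod>i\<in>{1..N}. x i ^ count_list w i)"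
proof (induction w)
  case Nil then show ?case by simp
next
  case (Cons a w)
  then have a: "a \<in> {1..N}" and IH: "prod_list (map x w) = (\<Prod>i\<in>{1..N}. x i ^ count_list w i)" by auto
  have "(\<Prod>i\<in>{1..N}. x i ^ count_list (a # w) i) = (\<Prod>i\<in>{1..N}. x i ^ count_list w i * (if a = i then x i else 1))"
    by (rule prod.cong) (auto simp: mult.commute)
  also have "\<dots> = (\<Prod>i\<in>{1..N}. x i ^ count_list w i) * (\<Prod>i\<in>{1..N}. if a = i then x i else 1)"
    by (rule prod.distrib)
  also have "(\<Prod>i\<in>{1..N}. if a = i then x i else 1) = (if a \<in> {1..N} then x a else 1)"
    by (rule prod.delta') simp
  also have "\<dots> = x a" using a by simp
  finally show ?case using IH by (simp add: mult.commute)
qed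

lemma schur_list: "ispart nu \<Longrightarrow> schur N nu x = (\<Sum>P\<in>SL N nu. prod_list (map x (concat P)))"
proof -
  assume pa: "ispart nu"
  have "schur N nu x = (\<Sum>T\<in>ST N nu. \<Prod>p\<in>cells nu. x (T p))"
    by (simp add: schur_def ST_def)
  also have "\<dots> = (\<Sum>P\<in>SL N nu. \<Prod>p\<in>cells nu. x (tof P p))"
    by (rule sum.reindex_bij_betw[OF bij_tof[OF pa], symmetric])
  also have "\<dots> = (\<Sum>P\<in>SL N nu. prod_list (map x (concat P)))"
  proof (rule sum.cong)
    fix P assume "P \<in> SL N nu"
    then have "nu = map length P" by (simp add: SL_def)
    then show "(\<Prod>p\<in>cells nu. x (tof P p)) = prod_list (map x (concat P))" using wt_cells by simp
  qed simp
  finally show ?thesis .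
qed

definition V :: "nat list \<Rightarrow> nat list set" where
  "V nu = {rho. valid rho \<and> shp rho = nu}"

lemma B_seq: "ispart nu \<Longrightarrow>
  (\<Sum>T\<in>QYT nu. q ^ tab_maj nu T * t ^ tab_des nu T) = (\<Sum>rho\<in>V nu. phi q t (Dset (\<lambda>a b. a < b) (rev rho)))"
proof -
  assume pa: "ispart nu"
  have b: "bij_betw qmap (V nu) (QYT nu)"
    unfolding bij_betw_def
  proof
    show "inj_on qmap (V nu)" unfolding inj_on_def V_def using qmap_inj by auto
    show "qmap ` V nu = QYT nu"
    proof
      show "qmap ` V nu \<subseteq> QYT nu" unfolding V_def QYT_def using qyt_qmap by auto
      show "QYT nu \<subseteq> qmap ` V nu"
      proof
        fix T assume "T \<in> QYT nu"
        then have "qyt nu T" by (simp add: QYT_def)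
        from qmap_surj[OF refl pa this] obtain rho where "valid rho" "shp rho = nu" "qmap rho = T" by blast
        then show "T \<in> qmap ` V nu" unfolding V_def by blast
      qed
    qed
  qed
  have "(\<Sum>T\<in>QYT nu. q ^ tab_maj nu T * t ^ tab_des nu T) = (\<Sum>rho\<in>V nu. q ^ tab_maj nu (qmap rho) * t ^ tab_des nu (qmap rho))"
    by (rule sum.reindex_bij_betw[OF b, symmetric])
  also have "\<dots> = (\<Sum>rho\<in>V nu. phi q t (Dset (\<lambda>a b. a < b) (rev rho)))"
  proof (rule sum.cong)
    fix rho assume "rho \<in> V nu"
    then have v: "valid rho" and s: "shp rho = nu" by (auto simp: V_def)
    have "syt_Des nu (standardize nu (qmap rho)) = Dset (\<lambda>a b. a < b) (rev rho)"
      using std_qmap[OF v] syt_Des_smap[OF v] s by simp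
    then show "q ^ tab_maj nu (qmap rho) * t ^ tab_des nu (qmap rho) = phi q t (Dset (\<lambda>a b. a < b) (rev rho))"
      by (simp add: tab_maj_def tab_des_def phi_def)
  qed simp
  finally show ?thesis .
qed


definition Wd :: "nat \<Rightarrow> nat \<Rightarrow> nat list set" where
  "Wd n N = {v. length v = n \<and> set v \<subseteq> {1..N}}"

definition Tg :: "nat \<Rightarrow> nat \<Rightarrow> (nat list list \<times> nat list) set" where
  "Tg n N = {(P, rho). ssytL P \<and> set (concat P) \<subseteq> {1..N} \<and> valid rho \<and> shp rho = map length P \<and> length rho = n}"

lemma finite_Wd: "finite (Wd n N)"
proof -
  have "Wd n N = {v. set v \<subseteq> {1..N} \<and> length v = n}" by (auto simp: Wd_def)
  then show ?thesis using finite_lists_length_eq[of "{1..N}" n] by simp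
qed

lemma bij_rsk: "bij_betw rsk (Wd n N) (Tg n N)"
  unfolding bij_betw_def
proof
  show "inj_on rsk (Wd n N)" using rsk_inj by (auto simp: inj_on_def)
  show "rsk ` Wd n N = Tg n N"
  proof
    show "rsk ` Wd n N \<subseteq> Tg n N"
    proof
      fix z assume "z \<in> rsk ` Wd n N"
      then obtain v where v: "v \<in> Wd n N" "z = rsk v" by blast
      obtain P rho where r: "rsk v = (P, rho)" by fastforce
      from rsk_props[OF r] have "ssytL P" "valid rho" "shp rho = map length P" "mset (concat P) = mset v"
        "length rho = length v" by auto
      moreover have "set (concat P) = set v" using \<open>mset (concat P) = mset v\<close> by (metis set_mset_mset)
      ultimately show "z \<in> Tg n N" using v r by (auto simp: Wd_def Tg_def)
    qed
    show "Tg n N \<subseteq> rsk ` Wd n N"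
    proof
      fix z assume "z \<in> Tg n N"
      then obtain P rho where z: "z = (P, rho)" "ssytL P" "set (concat P) \<subseteq> {1..N}" "valid rho"
        "shp rho = map length P" "length rho = n" by (auto simp: Tg_def)
      from rsk_surj[OF z(2) z(4) z(5)] obtain v where r: "rsk v = (P, rho)" by blast
      from rsk_props[OF r] have "mset (concat P) = mset v" "length rho = length v" by auto
      then have "set v = set (concat P)" by (metis set_mset_mset)
      then have "v \<in> Wd n N" using z \<open>length rho = length v\<close> by (auto simp: Wd_def)
      then show "z \<in> rsk ` Wd n N" using r z by force
    qed
  qed
qed

lemma prod_list_mset:
  fixes x :: "'c \<Rightarrow> 'b::comm_monoid_mult"
  shows "mset u = mset v \<Longrightarrow> prod_list (map x u) = prod_list (map x v)"
proof -
  assume e: "mset u = mset v"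
  have "mset (map x u) = mset (map x v)" using e by (simp only: mset_map)
  then have "prod_mset (mset (map x u)) = prod_mset (mset (map x v))" by (rule arg_cong)
  then show ?thesis by (simp only: prod_mset_prod_list)
qed

lemma rsk_sum: "(\<Sum>v\<in>Wd n N. phi q t (Dset (\<lambda>a b. b < a) (rev v)) * prod_list (map x v)) =
  (\<Sum>z\<in>Tg n N. phi q t (Dset (\<lambda>a b. a < b) (rev (snd z))) * prod_list (map x (concat (fst z))))"
proof -
  have "(\<Sum>z\<in>Tg n N. phi q t (Dset (\<lambda>a b. a < b) (rev (snd z))) * prod_list (map x (concat (fst z)))) =
     (\<Sum>v\<in>Wd n N. phi q t (Dset (\<lambda>a b. a < b) (rev (snd (rsk v)))) * prod_list (map x (concat (fst (rsk v)))))"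
    by (rule sum.reindex_bij_betw[OF bij_rsk, symmetric])
  also have "\<dots> = (\<Sum>v\<in>Wd n N. phi q t (Dset (\<lambda>a b. b < a) (rev v)) * prod_list (map x v))"
  proof (rule sum.cong)
    fix v assume "v \<in> Wd n N"
    obtain P rho where r: "rsk v = (P, rho)" by fastforce
    have "Dset (\<lambda>a b. b < a) (rev v) = Dset (\<lambda>a b. a < b) (rev rho)" using rsk_des[OF r] .
    moreover have "prod_list (map x (concat P)) = prod_list (map x v)"
      using rsk_props[OF r] prod_list_mset by blast
    ultimately show "phi q t (Dset (\<lambda>a b. a < b) (rev (snd (rsk v)))) * prod_list (map x (concat (fst (rsk v)))) =
        phi q t (Dset (\<lambda>a b. b < a) (rev v)) * prod_list (map x v)" using r by simp
  qed simp
  finally show ?thesis by simp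
qed

lemma partitions_iff: "nu \<in> partitions n \<longleftrightarrow> sum_list nu = n \<and> ispart nu"
  by (auto simp: partitions_def ispart_def)

lemma length_le_sum: "0 \<notin> set xs \<Longrightarrow> length xs \<le> sum_list (xs::nat list)"
  by (induction xs) auto

lemma finite_partitions: "finite (partitions n)"
proof -
  have "partitions n \<subseteq> {xs. set xs \<subseteq> {0..n} \<and> length xs \<le> n}"
  proof
    fix nu assume "nu \<in> partitions n"
    then have s: "sum_list nu = n" and z: "0 \<notin> set nu" by (auto simp: partitions_def)
    have "set nu \<subseteq> {0..n}" using s member_le_sum_list[of _ nu] by auto
    moreover have "length nu \<le> n" using length_le_sum[OF z] s by simp
    ultimately show "nu \<in> {xs. set xs \<subseteq> {0..n} \<and> length xs \<le> n}" by simp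
  qed
  moreover have "finite {xs. set xs \<subseteq> {0..n} \<and> length xs \<le> n}" by (rule finite_lists_length_le) simp
  ultimately show ?thesis by (rule finite_subset)
qed

lemma group_Tg: "(\<Sum>z\<in>Tg n N. G z) = (\<Sum>nu\<in>partitions n. \<Sum>z\<in>SL N nu \<times> V nu. G z)"
proof -
  have fT: "finite (Tg n N)" using bij_betw_finite[OF bij_rsk] finite_Wd by blast
  have im: "(\<lambda>z. map length (fst z)) ` Tg n N \<subseteq> partitions n"
  proof
    fix nu assume "nu \<in> (\<lambda>z. map length (fst z)) ` Tg n N"
    then obtain z where zz: "z \<in> Tg n N" "nu = map length (fst z)" by blast
    obtain P rho where zp: "z = (P, rho)" by fastforce
    have z: "nu = map length P" "valid rho" "shp rho = map length P" "length rho = n"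
      using zz zp unfolding Tg_def by auto
    from valid_shape[OF z(2)] z show "nu \<in> partitions n" by (auto simp: partitions_def)
  qed
  have "(\<Sum>z\<in>Tg n N. G z) = (\<Sum>nu\<in>partitions n. \<Sum>z\<in>{z \<in> Tg n N. map length (fst z) = nu}. G z)"
    by (rule sum.group[OF fT finite_partitions im, symmetric])
  also have "\<dots> = (\<Sum>nu\<in>partitions n. \<Sum>z\<in>SL N nu \<times> V nu. G z)"
  proof (rule sum.cong)
    fix nu assume nu: "nu \<in> partitions n"
    have "{z \<in> Tg n N. map length (fst z) = nu} = SL N nu \<times> V nu"
    proof (rule set_eqI)
      fix z :: "nat list list \<times> nat list"
      obtain P rho where z: "z = (P, rho)" by fastforce
      show "z \<in> {z \<in> Tg n N. map length (fst z) = nu} \<longleftrightarrow> z \<in> SL N nu \<times> V nu"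
      proof
        assume "z \<in> {z \<in> Tg n N. map length (fst z) = nu}"
        then show "z \<in> SL N nu \<times> V nu" using z by (auto simp: Tg_def SL_def V_def)
      next
        assume a: "z \<in> SL N nu \<times> V nu"
        then have "valid rho" "shp rho = nu" using z by (auto simp: V_def)
        then have "length rho = n" using valid_shape[of rho] nu by (auto simp: partitions_def)
        then show "z \<in> {z \<in> Tg n N. map length (fst z) = nu}" using a z by (auto simp: Tg_def SL_def V_def)
      qed
    qed
    then show "(\<Sum>z\<in>{z \<in> Tg n N. map length (fst z) = nu}. G z) = (\<Sum>z\<in>SL N nu \<times> V nu. G z)" by simp
  qed simp
  finally show ?thesis .
qed

lemma rev_sum: "(\<Sum>w\<in>Wd n N. phi q t (word_Des w) * prod_list (map x w)) =
   (\<Sum>v\<in>Wd n N. phi q t (Dset (\<lambda>a b. b < a) (rev v)) * prod_list (map x v))"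
proof -
  have b: "bij_betw rev (Wd n N) (Wd n N)"
    by (rule bij_betw_byWitness[where f' = rev]) (auto simp: Wd_def)
  have "(\<Sum>w\<in>Wd n N. phi q t (word_Des w) * prod_list (map x w)) =
     (\<Sum>v\<in>Wd n N. phi q t (word_Des (rev v)) * prod_list (map x (rev v)))"
    by (rule sum.reindex_bij_betw[OF b, symmetric])
  also have "\<dots> = (\<Sum>v\<in>Wd n N. phi q t (Dset (\<lambda>a b. b < a) (rev v)) * prod_list (map x v))"
    by (simp add: word_Des_Dset rev_map[symmetric])
  finally show ?thesis .
qed

definition cntf :: "nat \<Rightarrow> nat list \<Rightarrow> nat \<Rightarrow> nat" where
  "cntf N w = (\<lambda>i. if i \<in> {1..N} then count_list w i else 0)"

definition cl :: "nat \<Rightarrow> (nat \<Rightarrow> nat) \<Rightarrow> nat list" where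
  "cl N \<alpha> = map \<alpha> [1..<Suc N]"

definition lamw :: "nat \<Rightarrow> nat list \<Rightarrow> nat list" where
  "lamw N w = rev (sort (filter (\<lambda>k. k \<noteq> 0) (cl N (cntf N w))))"

definition AdmS :: "nat \<Rightarrow> nat list \<Rightarrow> (nat \<Rightarrow> nat) set" where
  "AdmS N lam = {\<alpha>. (\<forall>i. i \<notin> {1..N} \<longrightarrow> \<alpha> i = 0) \<and>
                 mset (filter (\<lambda>k. k \<noteq> 0) (map \<alpha> [1..<Suc N])) = mset lam}"

lemma monomial_AdmS: "monomial_sym N lam x = (\<Sum>\<alpha>\<in>AdmS N lam. \<Prod>i\<in>{1..N}. x i ^ \<alpha> i)"
  by (simp add: monomial_sym_def AdmS_def)

lemma sum_filter_nz: "sum_list (filter (\<lambda>k. k \<noteq> 0) xs) = sum_list (xs::nat list)"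
  by (induction xs) auto

lemma sum_mset_eq: "mset xs = mset ys \<Longrightarrow> sum_list xs = sum_list (ys::nat list)"
  by (metis sum_mset_sum_list)

lemma length_cl[simp]: "length (cl N \<alpha>) = N" by (simp add: cl_def)

lemma nth_cl: "i < N \<Longrightarrow> cl N \<alpha> ! i = \<alpha> (Suc i)" by (simp add: cl_def del: upt_Suc)

lemma sum_cl: "w \<in> Wd n N \<Longrightarrow> sum_list (cl N (cntf N w)) = n"
proof -
  assume w: "w \<in> Wd n N"
  have "sum_list (cl N (cntf N w)) = sum (cntf N w) (set [1..<Suc N])"
    unfolding cl_def by (rule interv_sum_list_conv_sum_set_nat)
  also have "set [1..<Suc N] = {1..N}" by auto
  also have "sum (cntf N w) {1..N} = sum (count_list w) {1..N}" by (rule sum.cong) (auto simp: cntf_def)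
  also have "\<dots> = length w" using w by (intro sum_count_set) (auto simp: Wd_def)
  finally show ?thesis using w by (simp add: Wd_def)
qed

lemma lamw_part: "w \<in> Wd n N \<Longrightarrow> lamw N w \<in> partitions n"
proof -
  assume w: "w \<in> Wd n N"
  let ?xs = "filter (\<lambda>k. k \<noteq> 0) (cl N (cntf N w))"
  have "sum_list (lamw N w) = sum_list ?xs" unfolding lamw_def by (rule sum_mset_eq) simp
  also have "\<dots> = n" using sum_cl[OF w] sum_filter_nz by simp
  finally have s: "sum_list (lamw N w) = n" .
  have so: "sorted_wrt (\<ge>) (lamw N w)" unfolding lamw_def sorted_wrt_rev by simp
  have z: "0 \<notin> set (lamw N w)" unfolding lamw_def by simp
  show ?thesis using s so z by (simp add: partitions_def)
qed

lemma cntf_Adm: "cntf N w \<in> AdmS N (lamw N w)"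
  unfolding AdmS_def lamw_def cl_def by (auto simp: cntf_def)

lemma Adm_lamw: "lam \<in> partitions n \<Longrightarrow> cntf N w \<in> AdmS N lam \<Longrightarrow> lamw N w = lam"
proof -
  assume l: "lam \<in> partitions n" and a: "cntf N w \<in> AdmS N lam"
  let ?xs = "filter (\<lambda>k. k \<noteq> 0) (cl N (cntf N w))"
  have m: "mset (rev lam) = mset ?xs" using a by (simp add: AdmS_def cl_def)
  have "sorted_wrt (\<ge>) lam" using l by (simp add: partitions_def)
  then have "sorted (rev lam)" by (simp add: sorted_wrt_rev)
  then have "sort ?xs = rev lam" using properties_for_sort[OF m] by simp
  then show ?thesis by (simp add: lamw_def)
qed

lemma Adm_le: "lam \<in> partitions n \<Longrightarrow> \<alpha> \<in> AdmS N lam \<Longrightarrow> \<alpha> i \<le> n"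
proof (cases "\<alpha> i = 0")
  case False
  assume l: "lam \<in> partitions n" and a: "\<alpha> \<in> AdmS N lam"
  then have i: "i \<in> {1..N}" using False by (auto simp: AdmS_def)
  then have "\<alpha> i \<in> set (filter (\<lambda>k. k \<noteq> 0) (map \<alpha> [1..<Suc N]))" using False by (auto simp del: upt_Suc)
  also have "set (filter (\<lambda>k. k \<noteq> 0) (map \<alpha> [1..<Suc N])) = set lam"
    using a by (metis (mono_tags, lifting) AdmS_def mem_Collect_eq set_mset_mset)
  finally have "\<alpha> i \<in> set lam" .
  then have "\<alpha> i \<le> sum_list lam" using member_le_sum_list[of "\<alpha> i" lam] by simp
  then show ?thesis using l by (simp add: partitions_def)
qed simp

lemma finite_AdmS: "lam \<in> partitions n \<Longrightarrow> finite (AdmS N lam)"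
proof -
  assume l: "lam \<in> partitions n"
  have inj: "inj_on (cl N) (AdmS N lam)"
  proof (rule inj_onI)
    fix \<alpha> \<beta> assume a: "\<alpha> \<in> AdmS N lam" "\<beta> \<in> AdmS N lam" and e: "cl N \<alpha> = cl N \<beta>"
    show "\<alpha> = \<beta>"
    proof
      fix i show "\<alpha> i = \<beta> i"
      proof (cases "i \<in> {1..N}")
        case True
        then obtain j where j: "i = Suc j" "j < N" by (cases i) auto
        have "cl N \<alpha> ! j = cl N \<beta> ! j" using e by simp
        then show ?thesis using j nth_cl by simp
      next
        case False then show ?thesis using a by (simp add: AdmS_def)
      qed
    qed
  qed
  have "cl N ` AdmS N lam \<subseteq> {xs. set xs \<subseteq> {0..n} \<and> length xs = N}"
    using Adm_le[OF l] by (auto simp: cl_def)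
  then have "finite (cl N ` AdmS N lam)"
    by (rule finite_subset) (rule finite_lists_length_eq, simp)
  then show ?thesis using finite_imageD inj by blast
qed

lemma Wc_cl: "lam \<in> partitions n \<Longrightarrow> \<alpha> \<in> AdmS N lam \<Longrightarrow> {w \<in> Wd n N. cntf N w = \<alpha>} = Wc (cl N \<alpha>)"
proof -
  assume l: "lam \<in> partitions n" and a: "\<alpha> \<in> AdmS N lam"
  have "sum_list (filter (\<lambda>k. k \<noteq> 0) (cl N \<alpha>)) = sum_list lam"
    using a by (intro sum_mset_eq) (simp add: AdmS_def cl_def)
  then have s: "sum_list (cl N \<alpha>) = n" using l sum_filter_nz by (simp add: partitions_def)
  have z: "\<And>i. i \<notin> {1..N} \<Longrightarrow> \<alpha> i = 0" using a by (simp add: AdmS_def)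
  show ?thesis
  proof (rule set_eqI)
    fix w
    show "w \<in> {w \<in> Wd n N. cntf N w = \<alpha>} \<longleftrightarrow> w \<in> Wc (cl N \<alpha>)"
    proof
      assume "w \<in> {w \<in> Wd n N. cntf N w = \<alpha>}"
      then have w: "length w = n" "set w \<subseteq> {1..N}" "cntf N w = \<alpha>" by (auto simp: Wd_def)
      have "\<forall>i<N. count_list w (Suc i) = cl N \<alpha> ! i"
      proof (intro allI impI)
        fix i assume i: "i < N"
        have "count_list w (Suc i) = cntf N w (Suc i)" using i by (simp add: cntf_def)
        then show "count_list w (Suc i) = cl N \<alpha> ! i" using w(3) nth_cl[OF i] by simp
      qed
      then show "w \<in> Wc (cl N \<alpha>)" using w s by (simp add: Wc_def)
    next
      assume "w \<in> Wc (cl N \<alpha>)"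
      then have w: "length w = n" "set w \<subseteq> {1..N}" "\<forall>i<N. count_list w (Suc i) = cl N \<alpha> ! i"
        using s by (auto simp: Wc_def)
      have "cntf N w = \<alpha>"
      proof
        fix i show "cntf N w i = \<alpha> i"
        proof (cases "i \<in> {1..N}")
          case True
          then obtain j where j: "i = Suc j" "j < N" by (cases i) auto
          then show ?thesis using w(3) nth_cl[OF j(2)] by (simp add: cntf_def)
        next
          case False
          have "cntf N w i = 0" using False unfolding cntf_def by (simp only: if_False)
          moreover have "\<alpha> i = 0" using z False by blast
          ultimately show ?thesis by simp
        qed
      qed
      then show "w \<in> {w \<in> Wd n N. cntf N w = \<alpha>}" using w by (simp add: Wd_def)
    qed
  qed
qed

lemma Wc_pad: "Wc (lam @ replicate k 0) = Wc lam"
proof (rule set_eqI)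
  fix w
  let ?l = "length lam"
  show "w \<in> Wc (lam @ replicate k 0) \<longleftrightarrow> w \<in> Wc lam"
  proof
    assume a: "w \<in> Wc (lam @ replicate k 0)"
    then have l: "length w = sum_list lam" and s: "set w \<subseteq> {1..?l + k}"
      and c: "\<forall>i<?l + k. count_list w (Suc i) = (lam @ replicate k 0) ! i" by (auto simp: Wc_def)
    have "set w \<subseteq> {1..?l}"
    proof
      fix e assume e: "e \<in> set w"
      then have e1: "1 \<le> e" "e \<le> ?l + k" using s by auto
      show "e \<in> {1..?l}"
      proof (rule ccontr)
        assume "e \<notin> {1..?l}"
        then have "?l < e" using e1 by simp
        then obtain i where i: "e = Suc i" "?l \<le> i" "i < ?l + k" using e1 by (cases e) auto
        then have "count_list w e = 0" using c by (simp add: nth_append)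
        then have "e \<notin> set w" by (metis count_mset_0_iff count_mset)
        with e show False by simp
      qed
    qed
    moreover have "\<forall>i<?l. count_list w (Suc i) = lam ! i" using c by (simp add: nth_append)
    ultimately show "w \<in> Wc lam" using l by (simp add: Wc_def)
  next
    assume a: "w \<in> Wc lam"
    then have l: "length w = sum_list lam" and s: "set w \<subseteq> {1..?l}"
      and c: "\<forall>i<?l. count_list w (Suc i) = lam ! i" by (auto simp: Wc_def)
    have "\<forall>i<?l + k. count_list w (Suc i) = (lam @ replicate k 0) ! i"
    proof (intro allI impI)
      fix i assume i: "i < ?l + k"
      show "count_list w (Suc i) = (lam @ replicate k 0) ! i"
      proof (cases "i < ?l")
        case True then show ?thesis using c by (simp add: nth_append)
      next
        case False
        then have "Suc i \<notin> set w" using s by auto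
        then have "count_list w (Suc i) = 0" by (metis count_mset_0_iff count_mset)
        then show ?thesis using False i by (simp add: nth_append)
      qed
    qed
    then show "w \<in> Wc (lam @ replicate k 0)" using l s by (auto simp: Wc_def)
  qed
qed

lemma mset_cl_pad: "lam \<in> partitions n \<Longrightarrow> \<alpha> \<in> AdmS N lam \<Longrightarrow>
  mset (cl N \<alpha>) = mset (lam @ replicate (N - length lam) 0)"
proof -
  assume l: "lam \<in> partitions n" and a: "\<alpha> \<in> AdmS N lam"
  let ?xs = "cl N \<alpha>"
  have m1: "mset (filter (\<lambda>k. k \<noteq> 0) ?xs) = mset lam" using a by (simp add: AdmS_def cl_def)
  have e1: "mset ?xs = mset (filter (\<lambda>k. k \<noteq> 0) ?xs) + mset (filter (\<lambda>k. \<not> k \<noteq> 0) ?xs)"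
    unfolding mset_filter by (rule multiset_partition)
  have e2: "filter (\<lambda>k. \<not> k \<noteq> 0) ?xs = replicate (length (filter (\<lambda>k. \<not> k \<noteq> 0) ?xs)) 0"
    by (rule replicate_length_same[symmetric]) auto
  have e3: "length (filter (\<lambda>k. \<not> k \<noteq> 0) ?xs) = N - length lam"
  proof -
    have "length (filter (\<lambda>k. k \<noteq> 0) ?xs) + length (filter (\<lambda>k. \<not> k \<noteq> 0) ?xs) = N"
      using sum_length_filter_compl[of "\<lambda>k. k \<noteq> 0" ?xs] by simp
    moreover have "length (filter (\<lambda>k. k \<noteq> 0) ?xs) = length lam"
    proof -
      have "size (mset (filter (\<lambda>k. k \<noteq> 0) ?xs)) = size (mset lam)" using m1 by (rule arg_cong)
      then show ?thesis by (simp only: size_mset)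
    qed
    ultimately show ?thesis by simp
  qed
  have e23: "filter (\<lambda>k. \<not> k \<noteq> 0) ?xs = replicate (N - length lam) 0"
    using e2 unfolding e3 .
  have "mset ?xs = mset lam + mset (replicate (N - length lam) 0)"
    using e1 unfolding m1 e23 .
  then show ?thesis by simp
qed


lemma A_eq: "lam \<in> partitions n \<Longrightarrow> \<alpha> \<in> AdmS N lam \<Longrightarrow>
  (\<Sum>w\<in>Wc (cl N \<alpha>). g (word_Des w)) = (\<Sum>w\<in>Wc lam. g (word_Des w))"
  using F_perm[OF mset_cl_pad, of lam n \<alpha> N g] Wc_pad by simp

lemma inner_sum: "lam \<in> partitions n \<Longrightarrow> \<alpha> \<in> AdmS N lam \<Longrightarrow>
  (\<Sum>w\<in>{w \<in> Wd n N. cntf N w = \<alpha>}. phi q t (word_Des w) * prod_list (map x w)) =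
  (\<Sum>w\<in>Wc lam. phi q t (word_Des w)) * (\<Prod>i\<in>{1..N}. x i ^ \<alpha> i)"
proof -
  assume l: "lam \<in> partitions n" and a: "\<alpha> \<in> AdmS N lam"
  have "(\<Sum>w\<in>{w \<in> Wd n N. cntf N w = \<alpha>}. phi q t (word_Des w) * prod_list (map x w)) =
        (\<Sum>w\<in>{w \<in> Wd n N. cntf N w = \<alpha>}. phi q t (word_Des w) * (\<Prod>i\<in>{1..N}. x i ^ \<alpha> i))"
  proof (rule sum.cong)
    fix w assume "w \<in> {w \<in> Wd n N. cntf N w = \<alpha>}"
    then have w: "set w \<subseteq> {1..N}" "cntf N w = \<alpha>" by (auto simp: Wd_def)
    have "prod_list (map x w) = (\<Prod>i\<in>{1..N}. x i ^ count_list w i)" by (rule prod_list_count[OF w(1)])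
    also have "\<dots> = (\<Prod>i\<in>{1..N}. x i ^ \<alpha> i)"
    proof (rule prod.cong)
      fix i assume "i \<in> {1..N}"
      then have "count_list w i = cntf N w i" by (simp add: cntf_def)
      then show "x i ^ count_list w i = x i ^ \<alpha> i" using w(2) by simp
    qed simp
    finally show "phi q t (word_Des w) * prod_list (map x w) = phi q t (word_Des w) * (\<Prod>i\<in>{1..N}. x i ^ \<alpha> i)"
      by simp
  qed simp
  also have "\<dots> = (\<Sum>w\<in>{w \<in> Wd n N. cntf N w = \<alpha>}. phi q t (word_Des w)) * (\<Prod>i\<in>{1..N}. x i ^ \<alpha> i)"
    by (rule sum_distrib_right[symmetric])
  also have "(\<Sum>w\<in>{w \<in> Wd n N. cntf N w = \<alpha>}. phi q t (word_Des w)) = (\<Sum>w\<in>Wc lam. phi q t (word_Des w))"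
    using Wc_cl[OF l a] A_eq[OF l a] by simp
  finally show ?thesis .
qed

lemma LHS_eq: "(\<Sum>lam\<in>partitions n. (\<Sum>w\<in>words lam. q ^ word_maj w * t ^ word_des w) * monomial_sym N lam x)
   = (\<Sum>w\<in>Wd n N. phi q t (word_Des w) * prod_list (map x w))"
proof -
  let ?G = "\<lambda>w. phi q t (word_Des w) * prod_list (map x w)"
  have A: "\<And>lam. (\<Sum>w\<in>words lam. q ^ word_maj w * t ^ word_des w) = (\<Sum>w\<in>Wc lam. phi q t (word_Des w))"
    by (simp add: words_Wc word_maj_def word_des_def phi_def)
  have "(\<Sum>lam\<in>partitions n. (\<Sum>w\<in>words lam. q ^ word_maj w * t ^ word_des w) * monomial_sym N lam x)
     = (\<Sum>lam\<in>partitions n. \<Sum>\<alpha>\<in>AdmS N lam. (\<Sum>w\<in>Wc lam. phi q t (word_Des w)) * (\<Prod>i\<in>{1..N}. x i ^ \<alpha> i))"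
    by (simp add: A monomial_AdmS sum_distrib_left)
  also have "\<dots> = (\<Sum>lam\<in>partitions n. \<Sum>\<alpha>\<in>AdmS N lam. \<Sum>w\<in>{w \<in> Wd n N. cntf N w = \<alpha>}. ?G w)"
    by (intro sum.cong refl) (simp add: inner_sum)
  also have "\<dots> = (\<Sum>lam\<in>partitions n. \<Sum>w\<in>{w \<in> Wd n N. lamw N w = lam}. ?G w)"
  proof (rule sum.cong[OF refl])
    fix lam assume l: "lam \<in> partitions n"
    let ?S = "{w \<in> Wd n N. lamw N w = lam}"
    have fS: "finite ?S" using finite_Wd by simp
    have im: "cntf N ` ?S \<subseteq> AdmS N lam" using cntf_Adm by auto
    have "(\<Sum>\<alpha>\<in>AdmS N lam. \<Sum>w\<in>{w \<in> ?S. cntf N w = \<alpha>}. ?G w) = (\<Sum>w\<in>?S. ?G w)"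
      by (rule sum.group[OF fS finite_AdmS[OF l] im])
    moreover have "\<And>\<alpha>. \<alpha> \<in> AdmS N lam \<Longrightarrow> {w \<in> ?S. cntf N w = \<alpha>} = {w \<in> Wd n N. cntf N w = \<alpha>}"
      using Adm_lamw[OF l] by auto
    ultimately show "(\<Sum>\<alpha>\<in>AdmS N lam. \<Sum>w\<in>{w \<in> Wd n N. cntf N w = \<alpha>}. ?G w) = (\<Sum>w\<in>?S. ?G w)"
      by simp
  qed
  also have "\<dots> = (\<Sum>w\<in>Wd n N. ?G w)"
  proof (rule sum.group[OF finite_Wd finite_partitions])
    show "lamw N ` Wd n N \<subseteq> partitions n" using lamw_part by blast
  qed
  finally show ?thesis .
qed

theorem mainTheorem10:
  fixes n N :: nat and q t :: "'a::comm_ring_1" and x :: "nat \<Rightarrow> 'a"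
  shows "(\<Sum>lam\<in>partitions n. (\<Sum>w\<in>words lam. q ^ word_maj w * t ^ word_des w)
             * monomial_sym N lam x)
       = (\<Sum>nu\<in>partitions n. (\<Sum>T\<in>QYT nu. q ^ tab_maj nu T * t ^ tab_des nu T)
             * schur N nu x)"
proof -
  let ?f = "\<lambda>rho. phi q t (Dset (\<lambda>a b. a < b) (rev rho))"
  let ?g = "\<lambda>P. prod_list (map x (concat P))"
  have "(\<Sum>lam\<in>partitions n. (\<Sum>w\<in>words lam. q ^ word_maj w * t ^ word_des w) * monomial_sym N lam x)
      = (\<Sum>w\<in>Wd n N. phi q t (word_Des w) * prod_list (map x w))" by (rule LHS_eq)
  also have "\<dots> = (\<Sum>v\<in>Wd n N. phi q t (Dset (\<lambda>a b. b < a) (rev v)) * prod_list (map x v))" by (rule rev_sum)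
  also have "\<dots> = (\<Sum>z\<in>Tg n N. ?f (snd z) * ?g (fst z))" by (rule rsk_sum)
  also have "\<dots> = (\<Sum>nu\<in>partitions n. \<Sum>z\<in>SL N nu \<times> V nu. ?f (snd z) * ?g (fst z))" by (rule group_Tg)
  also have "\<dots> = (\<Sum>nu\<in>partitions n. (\<Sum>rho\<in>V nu. ?f rho) * (\<Sum>P\<in>SL N nu. ?g P))"
  proof (rule sum.cong[OF refl])
    fix nu
    have "(\<Sum>z\<in>SL N nu \<times> V nu. ?f (snd z) * ?g (fst z)) = (\<Sum>P\<in>SL N nu. \<Sum>rho\<in>V nu. ?f rho * ?g P)"
      by (simp add: sum.cartesian_product case_prod_unfold)
    also have "\<dots> = (\<Sum>P\<in>SL N nu. (\<Sum>rho\<in>V nu. ?f rho) * ?g P)" by (simp add: sum_distrib_right)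
    also have "\<dots> = (\<Sum>rho\<in>V nu. ?f rho) * (\<Sum>P\<in>SL N nu. ?g P)" by (simp add: sum_distrib_left)
    finally show "(\<Sum>z\<in>SL N nu \<times> V nu. ?f (snd z) * ?g (fst z)) = (\<Sum>rho\<in>V nu. ?f rho) * (\<Sum>P\<in>SL N nu. ?g P)" .
  qed
  also have "\<dots> = (\<Sum>nu\<in>partitions n. (\<Sum>T\<in>QYT nu. q ^ tab_maj nu T * t ^ tab_des nu T) * schur N nu x)"
  proof (rule sum.cong[OF refl])
    fix nu assume "nu \<in> partitions n"
    then have pa: "ispart nu" by (simp add: partitions_iff)
    show "(\<Sum>rho\<in>V nu. ?f rho) * (\<Sum>P\<in>SL N nu. ?g P) = (\<Sum>T\<in>QYT nu. q ^ tab_maj nu T * t ^ tab_des nu T) * schur N nu x"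
      using B_seq[OF pa, of q t] schur_list[OF pa, of N x] by simp
  qed
  finally show ?thesis .
qed


end
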